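(* Let $P_0,P_1\in\mathcal{P}(\mathbb{R}^d)$ and let $\gamma\in\mathcal{P}(\mathbb{R}^d\times\mathbb{R}^d)$ be a coupling with first and second marginals $P_0$ and $P_1$. Suppose that $X_t=(1-t)X_0+t\,X_1$ with $(X_0,X_1)\sim\gamma$, and that for all $t\in[0,1]$ we have $\mathbb{E}\,\|X_t\|^2<\infty$ and $\mathbb{E}\,\|\Pi_t(X_t)\|^2<\infty$, and that $t\mapsto\Pi_t(x)$ is continuous at $t=1$ for all $x\in\mathbb{R}^d$. Then we have $$\nabla\cdot(\rho_t\,\Pi_t)=0$$ only if there exists a measurable map $T:\mathbb{R}^d\to\mathbb{R}^d$ satisfying $T_\sharp P_0=P_1$ such that $$(\mathrm{id}\times T)_\sharp P_0=\gamma,$$ where $\mathrm{id}:\mathbb{R}^d\to\mathbb{R}^d$ is the identity map and $(\mathrm{id}\times T)(x)=(x,T(x))$. Moreover, the condition is sufficient for $t\in[0,1)$ provided the Jacobian of the map $T$ is positive semi-definite at every $x\in\mathbb{R}^d$. In particular, this holds when $T$ is a continuously differentiable optimal transport map (for the squared Euclidean cost) from $P_0$ to $P_1$, provided the process $X_t=(1-t)X_0+t\,T(X_0)$ satisfies $\mathbb{E}\,\|X_t\|^2<\infty$ and $\mathbb{E}\,\|\Pi_t(X_t)\|^2<\infty$ for all $t\in[0,1]$ and $t\mapsto\Pi_t(x)$ is continuous at $t=1$ for all $x\in\mathbb{R}^d$.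
   Context: For a stochastic process $(X_t)_{t\in[0,1]}$ on $\mathbb{R}^d$, $\rho_t$ denotes the density (w.r.t. Lebesgue measure) of the marginal law of $X_t$; $v_t(x)=\mathbb{E}[\dot X_t\mid X_t=x]$ is the conditional velocity; $\mathcal{C}_t(x)=\mathbb{E}[\dot X_t\otimes\dot X_t\mid X_t=x]$; and $\Pi_t(x)=\mathcal{C}_t(x)-v_t(x)\otimes v_t(x)$ is the conditional covariance (Reynolds stress) tensor. For a matrix field $V$, $(\nabla\cdot V)_j=\sum_i\partial_i V_{ij}$. Standing regularity assumptions: the marginal densities $\rho_t$ exist for all $t\in[0,1]$; sample paths $t\mapsto X_t(\omega)$ lie in $W^{2,2}([0,1];\mathbb{R}^d)$; the flow map $\phi_t$ of $\partial_t\phi_t(x)=v_t(\phi_t(x))$, $\phi_0(x)=x$, has $t\mapsto\phi_t(x)$ in $C^2$ and $x\mapsto\phi_t(x)$ a homeomorphism for each $t$; and $(t,x)\mapsto v_t(x)$ is jointly continuously differentiable. *)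

theory Defs
  imports "HOL-Analysis.Analysis" "HOL-Probability.Probability"
begin

text \<open>Points of R^d are modelled as real^'n for an arbitrary finite index type 'n (d = CARD('n)).
  d x d matrices are real^'n^'n; the norm of such a matrix is the Frobenius norm.\<close>

definition outer :: "real^'n \<Rightarrow> real^'n \<Rightarrow> real^'n^'n" where
  "outer v w = (\<chi> i j. v $ i * w $ j)"

definition interp :: "real \<Rightarrow> (real^'n) \<times> (real^'n) \<Rightarrow> real^'n" where
  "interp t p = (1 - t) *\<^sub>R fst p + t *\<^sub>R snd p"

definition vel :: "(real^'n) \<times> (real^'n) \<Rightarrow> real^'n" where
  "vel p = snd p - fst p"

text \<open>g is a version of the regression function y \<mapsto> E[Z | Y = y]: g is Borel,
  integrable w.r.t. the law of Y, and E[Z; Y \<in> A] = \<integral>_A g d(law of Y) for all Borel A.\<close>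
definition cond_exp_given ::
  "'a measure \<Rightarrow> ('a \<Rightarrow> 'b::euclidean_space) \<Rightarrow> ('a \<Rightarrow> 'c::euclidean_space) \<Rightarrow> ('b \<Rightarrow> 'c) \<Rightarrow> bool" where
  "cond_exp_given M Y Z g \<longleftrightarrow>
     Y \<in> borel_measurable M \<and> integrable M Z \<and> g \<in> borel_measurable borel \<and>
     integrable (distr M borel Y) g \<and>
     (\<forall>A\<in>sets borel. (LINT \<omega>:(Y -` A \<inter> space M)|M. Z \<omega>) = (LINT y:A|distr M borel Y. g y))"

definition reynolds :: "(real \<Rightarrow> real^'n \<Rightarrow> real^'n^'n) \<Rightarrow> (real \<Rightarrow> real^'n \<Rightarrow> real^'n) \<Rightarrow> real \<Rightarrow> real^'n \<Rightarrow> real^'n^'n" where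
  "reynolds C v t x = C t x - outer (v t x) (v t x)"

definition partial :: "'n \<Rightarrow> (real^'n \<Rightarrow> real) \<Rightarrow> real^'n \<Rightarrow> real" where
  "partial i f x = frechet_derivative f (at x) (axis i 1)"

fun Ck :: "nat \<Rightarrow> (real^'n \<Rightarrow> real) \<Rightarrow> bool" where
  "Ck 0 f = continuous_on UNIV f"
| "Ck (Suc k) f = ((\<forall>x. f differentiable (at x)) \<and> continuous_on UNIV f \<and> (\<forall>i. Ck k (partial i f)))"

definition test_fun :: "(real^'n \<Rightarrow> real) \<Rightarrow> bool" where
  "test_fun \<psi> \<longleftrightarrow> (\<forall>k. Ck k \<psi>) \<and> compact (closure {x. \<psi> x \<noteq> 0})"

definition weak_div_zero :: "(real^'n \<Rightarrow> real^'n^'n) \<Rightarrow> bool" where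
  "weak_div_zero V \<longleftrightarrow>
     (\<forall>\<psi>. test_fun \<psi> \<longrightarrow> (\<forall>j.
        integrable lborel (\<lambda>x. \<Sum>i\<in>UNIV. partial i \<psi> x * V x $ i $ j) \<and>
        (\<integral>x. (\<Sum>i\<in>UNIV. partial i \<psi> x * V x $ i $ j) \<partial>lborel) = 0))"

definition C1_on :: "('a::real_normed_vector) set \<Rightarrow> ('a \<Rightarrow> 'b::real_normed_vector) \<Rightarrow> bool" where
  "C1_on S f \<longleftrightarrow> (\<exists>f'. (\<forall>p\<in>S. (f has_derivative blinfun_apply (f' p)) (at p within S)) \<and> continuous_on S f')"

definition C2_path_on :: "real set \<Rightarrow> (real \<Rightarrow> 'b::real_normed_vector) \<Rightarrow> bool" where
  "C2_path_on I c \<longleftrightarrow> (\<exists>c1 c2. (\<forall>t\<in>I. (c has_vector_derivative c1 t) (at t within I) \<and>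
                                      (c1 has_vector_derivative c2 t) (at t within I)) \<and> continuous_on I c2)"

definition coupling :: "(real^'n) measure \<Rightarrow> (real^'n) measure \<Rightarrow> ((real^'n) \<times> (real^'n)) measure \<Rightarrow> bool" where
  "coupling P0 P1 \<pi> \<longleftrightarrow> prob_space \<pi> \<and> sets \<pi> = sets borel \<and>
     distr \<pi> borel fst = P0 \<and> distr \<pi> borel snd = P1"

definition ot_map :: "(real^'n) measure \<Rightarrow> (real^'n) measure \<Rightarrow> (real^'n \<Rightarrow> real^'n) \<Rightarrow> bool" where
  "ot_map P0 P1 T \<longleftrightarrow> T \<in> borel_measurable borel \<and> distr P0 borel T = P1 \<and>
     (\<forall>\<pi>. coupling P0 P1 \<pi> \<longrightarrow>
        (\<integral>\<^sup>+ x. ennreal ((norm (x - T x))\<^sup>2) \<partial>P0) \<le> (\<integral>\<^sup>+ p. ennreal ((norm (fst p - snd p))\<^sup>2) \<partial>\<pi>))"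

end

theory Submission
  imports Defs "HOL-Computational_Algebra.Polynomial"
begin

fun Pp :: "nat \<Rightarrow> real poly" where
  "Pp 0 = 1"
| "Pp (Suc m) = [:0,0,1:] * (Pp m - pderiv (Pp m))"

definition H :: "nat \<Rightarrow> real \<Rightarrow> real" where
  "H m u = (if u > 0 then poly (Pp m) (1/u) * exp (-1/u) else 0)"

lemma poly_exp_lim: "((\<lambda>w. poly p w * exp (-w)) \<longlongrightarrow> (0::real)) at_top"
proof -
  have e: "(\<lambda>w. poly p w * exp (-w)) = (\<lambda>w. \<Sum>i\<le>degree p. coeff p i * (w ^ i / exp w))"
    by (auto simp: poly_altdef sum_distrib_right exp_minus field_simps sum_divide_distrib)
  show ?thesis unfolding e
    by (rule tendsto_null_sum, rule tendsto_mult_right_zero, rule tendsto_power_div_exp_0)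
qed

lemma poly_exp_lim0: "((\<lambda>u. poly p (1/u) * exp (-1/u)) \<longlongrightarrow> (0::real)) (at_right 0)"
proof -
  have "filterlim (\<lambda>u::real. 1/u) at_top (at_right 0)"
    using filterlim_inverse_at_top_right by (simp add: inverse_eq_divide)
  from filterlim_compose[OF poly_exp_lim this] show ?thesis by (simp add: o_def)
qed

lemma H_pos_deriv:
  assumes "u > 0"
  shows "((\<lambda>u. poly p (1/u) * exp (-1/u)) has_real_derivative
          poly ([:0,0,1:] * (p - pderiv p)) (1/u) * exp (-1/u)) (at u)"
proof -
  have "((\<lambda>u. poly p (1/u) * exp (-1/u)) has_real_derivative
          poly (pderiv p) (1/u) * (- 1 / u^2) * exp (-1/u) + poly p (1/u) * (exp (-1/u) * (1/u^2))) (at u)"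
    using assms
    by (auto intro!: derivative_eq_intros DERIV_chain2[OF poly_DERIV] simp: power2_eq_square field_simps)
  moreover have "poly (pderiv p) (1/u) * (- 1 / u^2) * exp (-1/u) + poly p (1/u) * (exp (-1/u) * (1/u^2))
     = poly ([:0,0,1:] * (p - pderiv p)) (1/u) * exp (-1/u)"
    by (simp add: algebra_simps power2_eq_square divide_simps)
  ultimately show ?thesis by simp
qed

lemma H_deriv: "(H m has_real_derivative H (Suc m) u) (at u)"
proof (cases "u > 0")
  case True
  have "((\<lambda>u. poly (Pp m) (1/u) * exp (-1/u)) has_real_derivative H (Suc m) u) (at u)"
    using H_pos_deriv[OF True, of "Pp m"] True by (simp add: H_def)
  then show ?thesis
    apply (rule has_field_derivative_transform_within_open[where S="{0<..}"])
    using True by (auto simp: H_def)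
next
  case False
  show ?thesis
  proof (cases "u < 0")
    case True
    have "((\<lambda>_. 0) has_real_derivative H (Suc m) u) (at u)" using True by (simp add: H_def)
    then show ?thesis
      apply (rule has_field_derivative_transform_within_open[where S="{..<0}"])
      using True by (auto simp: H_def)
  next
    case False2: False
    then have u: "u = 0" using False by simp
    have r: "((\<lambda>y. (H m y - H m 0) / (y - 0)) \<longlongrightarrow> 0) (at_right 0)"
    proof -
      have "((\<lambda>y. poly ([:0,1:] * Pp m) (1/y) * exp (-1/y)) \<longlongrightarrow> 0) (at_right (0::real))"
        by (rule poly_exp_lim0)
      then show ?thesis
        apply (rule filterlim_cong[THEN iffD1, rotated 3])
          apply simp_all
        unfolding eventually_at_right_field by (rule exI[of _ 1]) (auto simp: H_def)
    qed
    have l: "((\<lambda>y. (H m y - H m 0) / (y - 0)) \<longlongrightarrow> 0) (at_left 0)"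
    proof (rule tendsto_eventually)
      show "eventually (\<lambda>y. (H m y - H m 0) / (y - 0) = 0) (at_left (0::real))"
        unfolding eventually_at_left_field by (rule exI[of _ "-1"]) (auto simp: H_def)
    qed
    have "((\<lambda>y. (H m y - H m 0) / (y - 0)) \<longlongrightarrow> 0) (at 0)"
      using l r by (simp add: filterlim_at_split)
    then show ?thesis unfolding u has_field_derivative_iff by (simp add: H_def)
  qed
qed

inductive_set SM :: "(real^'n \<Rightarrow> real) set" where
  SMc: "(\<lambda>x. c) \<in> SM"
| SMco: "(\<lambda>x. x$i) \<in> SM"
| SMad: "f \<in> SM \<Longrightarrow> g \<in> SM \<Longrightarrow> (\<lambda>x. f x + g x) \<in> SM"
| SMmu: "f \<in> SM \<Longrightarrow> g \<in> SM \<Longrightarrow> (\<lambda>x. f x * g x) \<in> SM"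
| SMhc: "f \<in> SM \<Longrightarrow> (\<lambda>x. H m (f x)) \<in> SM"

lemma SM_deriv:
  assumes "f \<in> SM"
  shows "\<exists>D. (\<forall>x. (f has_derivative D x) (at x)) \<and> (\<forall>i. (\<lambda>x. D x (axis i 1)) \<in> SM)"
  using assms
proof induction
  case (SMc c)
  show ?case by (rule exI[of _ "\<lambda>x h. 0"]) (auto intro: SM.intros)
next
  case (SMco i)
  show ?case
    apply (rule exI[of _ "\<lambda>x h. h$i"])
    apply (auto intro!: bounded_linear.has_derivative[OF bounded_linear_vec_nth] derivative_eq_intros)
    by (simp add: axis_def SM.SMc)
next
  case (SMad f g)
  then obtain Df Dg where f: "\<forall>x. (f has_derivative Df x) (at x)" "\<forall>i. (\<lambda>x. Df x (axis i 1)) \<in> SM"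
    and g: "\<forall>x. (g has_derivative Dg x) (at x)" "\<forall>i. (\<lambda>x. Dg x (axis i 1)) \<in> SM" by blast
  show ?case
    apply (rule exI[of _ "\<lambda>x h. Df x h + Dg x h"])
    using f g by (auto intro!: has_derivative_add SM.SMad)
next
  case (SMmu f g)
  then obtain Df Dg where f: "\<forall>x. (f has_derivative Df x) (at x)" "\<forall>i. (\<lambda>x. Df x (axis i 1)) \<in> SM"
    and g: "\<forall>x. (g has_derivative Dg x) (at x)" "\<forall>i. (\<lambda>x. Dg x (axis i 1)) \<in> SM" by blast
  show ?case
    apply (rule exI[of _ "\<lambda>x h. f x * Dg x h + Df x h * g x"])
    using f g SMmu.hyps by (auto intro!: has_derivative_mult SM.SMad SM.SMmu)
next
  case (SMhc f m)
  then obtain Df where f: "\<forall>x. (f has_derivative Df x) (at x)" "\<forall>i. (\<lambda>x. Df x (axis i 1)) \<in> SM" by blast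
  have "((\<lambda>x. H m (f x)) has_derivative (\<lambda>h. H (Suc m) (f x) * Df x h)) (at x)" for x
    using DERIV_chain2[OF H_deriv] f(1)
    by (auto intro!: derivative_eq_intros has_derivative_compose[of f "Df x" x UNIV "H m" "\<lambda>h. H (Suc m) (f x) * h"]
        H_deriv[unfolded has_field_derivative_def])
  then show ?case
    apply (intro exI[of _ "\<lambda>x h. H (Suc m) (f x) * Df x h"])
    using f SMhc.hyps by (auto intro!: SM.SMmu SM.SMhc)
qed

lemma SM_partial:
  assumes "f \<in> SM"
  shows "(\<forall>x. f differentiable (at x)) \<and> (\<forall>i. partial i f \<in> SM)"
proof -
  obtain D where D: "\<forall>x. (f has_derivative D x) (at x)" "\<forall>i. (\<lambda>x. D x (axis i 1)) \<in> SM"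
    using SM_deriv[OF assms] by blast
  have "partial i f = (\<lambda>x. D x (axis i 1))" for i
    unfolding partial_def using D(1) frechet_derivative_at by metis
  then show ?thesis using D unfolding differentiable_def by auto
qed

lemma SM_cont: "f \<in> SM \<Longrightarrow> continuous_on UNIV f"
  using SM_partial by (meson continuous_at_imp_continuous_on differentiable_imp_continuous_within)

lemma SM_Ck: "f \<in> SM \<Longrightarrow> Ck k f"
proof (induction k arbitrary: f)
  case 0 then show ?case using SM_cont by simp
next
  case (Suc k) then show ?case using SM_partial SM_cont by auto
qed

lemma SM_sum: "finite A \<Longrightarrow> (\<And>a. a \<in> A \<Longrightarrow> f a \<in> SM) \<Longrightarrow> (\<lambda>x. \<Sum>a\<in>A. f a x) \<in> SM"
proof (induction A rule: finite_induct)
  case empty then show ?case using SM.SMc[of 0] by simp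
next
  case (insert a A) then show ?case using SM.SMad[of "f a" "\<lambda>x. \<Sum>a\<in>A. f a x"] by simp
qed

definition qR :: "real \<Rightarrow> real^'n \<Rightarrow> real" where
  "qR R x = 1 + (- inverse (R^2)) * (\<Sum>l\<in>UNIV. x$l * x$l)"

definition psiR :: "'n \<Rightarrow> real \<Rightarrow> real^'n \<Rightarrow> real" where
  "psiR k R x = x$k * H 0 (qR R x)"

lemma psiR_SM: "psiR k R \<in> SM"
  unfolding psiR_def qR_def
  by (intro SM.intros SM_sum) auto

lemma H0_le1: "\<bar>H 0 u\<bar> \<le> 1"
  by (auto simp: H_def)

lemma H_cont: "continuous_on UNIV (H m)"
  using H_deriv by (meson DERIV_isCont continuous_at_imp_continuous_on)

lemma H_pos: "H m u \<noteq> 0 \<Longrightarrow> u > 0"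
  by (auto simp: H_def split: if_splits)

lemma qR_pos_bound:
  assumes "R > 0" "qR R x > 0"
  shows "(\<Sum>l\<in>UNIV. x$l * x$l) < R^2"
proof -
  have "inverse (R^2) * (\<Sum>l\<in>UNIV. x$l * x$l) < 1" using assms(2) by (simp add: qR_def)
  then show ?thesis using assms(1) by (simp add: field_simps)
qed

lemma qR_le1: "qR R x \<le> 1"
proof -
  have "0 \<le> (\<Sum>l\<in>UNIV. x$l * x$l)" by (intro sum_nonneg) simp
  then show ?thesis unfolding qR_def by simp
qed

lemma sumsq_norm: "(\<Sum>l\<in>UNIV. x$l * x$l) = (norm x)^2"
  by (simp add: norm_vec_def L2_set_def real_sqrt_pow2 sum_nonneg power2_eq_square real_norm_def)

lemma psiR_test: assumes "R > 0" shows "test_fun (psiR k R)"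
proof -
  have "{x. psiR k R x \<noteq> 0} \<subseteq> cball 0 R"
  proof
    fix x assume "x \<in> {x. psiR k R x \<noteq> 0}"
    then have "qR R x > 0" using H_pos by (auto simp: psiR_def)
    then have "(norm x)^2 < R^2" using qR_pos_bound[OF assms] sumsq_norm by metis
    then show "x \<in> cball 0 R" using assms by (simp add: power_less_imp_less_base less_imp_le)
  qed
  then have "bounded {x. psiR k R x \<noteq> 0}" using bounded_cball bounded_subset by blast
  then show ?thesis unfolding test_fun_def using SM_Ck[OF psiR_SM] compact_closure by blast
qed

lemma psiR_partial:
  "partial i (psiR k R) x = (if i = k then 1 else 0) * H 0 (qR R x)
      + x$k * (H 1 (qR R x) * (- inverse (R^2) * (2 * x$i)))"
proof -
  have dl: "((\<lambda>x. x$l * x$l) has_derivative (\<lambda>h. x$l * h$l + h$l * x$l)) (at x)" for l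
    by (rule has_derivative_mult[OF bounded_linear_imp_has_derivative[OF bounded_linear_vec_nth[of l]]
        bounded_linear_imp_has_derivative[OF bounded_linear_vec_nth[of l]]])
  have ds: "((\<lambda>x. \<Sum>l\<in>UNIV. x$l * x$l) has_derivative (\<lambda>h. \<Sum>l\<in>UNIV. x$l * h$l + h$l * x$l)) (at x)"
    by (rule has_derivative_sum) (rule dl)
  have dq: "(qR R has_derivative (\<lambda>h. 0 + (- inverse (R^2)) * (\<Sum>l\<in>UNIV. x$l * h$l + h$l * x$l))) (at x)"
    unfolding qR_def
    by (rule has_derivative_add[OF has_derivative_const[of 1] has_derivative_mult_right[OF ds, of "- inverse (R^2)"]])
  have dH: "((\<lambda>x. H 0 (qR R x)) has_derivative (\<lambda>h. H (Suc 0) (qR R x) * (0 + (- inverse (R^2)) * (\<Sum>l\<in>UNIV. x$l * h$l + h$l * x$l)))) (at x)"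
    using has_derivative_compose[OF dq H_deriv[unfolded has_field_derivative_def]] by (simp only: o_def)
  have dP: "(psiR k R has_derivative (\<lambda>h. x$k * (H (Suc 0) (qR R x) * (0 + (- inverse (R^2)) * (\<Sum>l\<in>UNIV. x$l * h$l + h$l * x$l))) + h$k * H 0 (qR R x))) (at x)"
    unfolding psiR_def
    by (rule has_derivative_mult[OF bounded_linear_imp_has_derivative[OF bounded_linear_vec_nth[of k]] dH])
  have e: "partial i (psiR k R) x = x$k * (H (Suc 0) (qR R x) * (0 + (- inverse (R^2)) * (\<Sum>l\<in>UNIV. x$l * axis i 1 $l + axis i 1 $l * x$l))) + axis i 1 $k * H 0 (qR R x)"
    unfolding partial_def frechet_derivative_at[OF dP, symmetric] by (rule refl)
  have s: "(\<Sum>l\<in>UNIV. x$l * axis i 1 $l + axis i (1::real) $l * x$l) = 2 * x$i"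
  proof -
    have "(\<Sum>l\<in>UNIV. x$l * axis i 1 $l + axis i (1::real) $l * x$l) = (\<Sum>l\<in>UNIV. if l = i then 2 * x$i else 0)"
      by (rule sum.cong) (auto simp: axis_def)
    then show ?thesis by simp
  qed
  have a: "axis i (1::real) $ k = (if i = k then 1 else 0)" by (simp add: axis_def)
  show ?thesis unfolding e s a by simp
qed

lemma H1_bound: "\<exists>B\<ge>0. \<forall>u\<le>1. \<bar>H 1 u\<bar> \<le> B"
proof -
  have "compact (H 1 ` {0..1})"
    by (rule compact_continuous_image) (auto intro: continuous_on_subset[OF H_cont])
  then obtain B where B: "\<forall>y\<in>H 1 ` {0..1}. norm y \<le> B" using compact_imp_bounded bounded_iff by metis
  show ?thesis
  proof (intro exI[of _ "max B 0"] conjI allI impI)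
    fix u :: real assume "u \<le> 1"
    show "\<bar>H 1 u\<bar> \<le> max B 0"
    proof (cases "u > 0")
      case True
      then have "H 1 u \<in> H 1 ` {0..1}" using \<open>u \<le> 1\<close> by auto
      then have "norm (H 1 u) \<le> B" using B by blast
      then show ?thesis by simp
    next
      case False then show ?thesis by (simp add: H_def)
    qed
  qed simp
qed

lemma partial_psiR_bound:
  assumes "R > 0" "\<forall>u\<le>1. \<bar>H 1 u\<bar> \<le> B" "B \<ge> 0"
  shows "\<bar>partial i (psiR k R) x\<bar> \<le> 1 + 2 * B"
proof -
  have t1: "\<bar>(if i = k then 1 else 0) * H 0 (qR R x)\<bar> \<le> 1" using H0_le1 by auto
  have t2: "\<bar>x$k * (H 1 (qR R x) * (- inverse (R^2) * (2 * x$i)))\<bar> \<le> 2 * B"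
  proof (cases "H 1 (qR R x) = 0")
    case True then show ?thesis using assms by simp
  next
    case False
    then have "qR R x > 0" by (rule H_pos)
    then have n: "(norm x)^2 < R^2" using qR_pos_bound[OF assms(1)] sumsq_norm by metis
    have "\<bar>x$k\<bar> * \<bar>x$i\<bar> \<le> norm x * norm x"
      by (intro mult_mono component_le_norm_cart) auto
    then have xx: "\<bar>x$k\<bar> * \<bar>x$i\<bar> \<le> R^2" using n by (simp add: power2_eq_square)
    have hb: "\<bar>H 1 (qR R x)\<bar> \<le> B" using assms(2) qR_le1 by blast
    have "\<bar>x$k * (H 1 (qR R x) * (- inverse (R^2) * (2 * x$i)))\<bar>
        = (\<bar>x$k\<bar> * \<bar>x$i\<bar>) * \<bar>H 1 (qR R x)\<bar> * (2 / R^2)"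
      using assms(1) by (simp add: abs_mult field_simps)
    also have "\<dots> \<le> R^2 * B * (2 / R^2)"
      using xx hb assms by (intro mult_right_mono mult_mono) auto
    also have "\<dots> = 2 * B" using assms(1) by simp
    finally show ?thesis .
  qed
  show ?thesis unfolding psiR_partial using t1 t2 abs_triangle_ineq order_trans by fastforce
qed

lemma partial_psiR_lim:
  "(\<lambda>n. partial i (psiR k (real (Suc n))) x) \<longlonglongrightarrow> (if i = k then 1 else 0) * H 0 1"
proof -
  have inv: "(\<lambda>n. inverse (real (Suc n) ^ 2)) \<longlonglongrightarrow> 0"
    using tendsto_power[OF LIMSEQ_inverse_real_of_nat, of 2] by (simp add: power_inverse)
  have q: "(\<lambda>n. qR (real (Suc n)) x) \<longlonglongrightarrow> 1"
    unfolding qR_def using tendsto_add[OF tendsto_const[of 1] tendsto_mult[OF tendsto_minus[OF inv] tendsto_const]]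
    by simp
  have H0: "(\<lambda>n. H 0 (qR (real (Suc n)) x)) \<longlonglongrightarrow> H 0 1"
    by (rule isCont_tendsto_compose[OF _ q]) (meson H_cont continuous_on_eq_continuous_at open_UNIV UNIV_I)
  have H1: "(\<lambda>n. H 1 (qR (real (Suc n)) x)) \<longlonglongrightarrow> H 1 1"
    by (rule isCont_tendsto_compose[OF _ q]) (meson H_cont continuous_on_eq_continuous_at open_UNIV UNIV_I)
  have "(\<lambda>n. (if i = k then 1 else 0) * H 0 (qR (real (Suc n)) x)
      + x$k * (H 1 (qR (real (Suc n)) x) * (- inverse (real (Suc n) ^2) * (2 * x$i))))
      \<longlonglongrightarrow> (if i = k then 1 else 0) * H 0 1 + x$k * (H 1 1 * (- 0 * (2 * x$i)))"
    by (intro tendsto_intros H0 H1 inv)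
  then show ?thesis unfolding psiR_partial by simp
qed

lemma div_zero_moment:
  fixes V :: "real^'n \<Rightarrow> real^'n^'n"
  assumes wd: "weak_div_zero V" and int: "\<And>i j. integrable lborel (\<lambda>x. V x $ i $ j)"
  shows "(\<integral>x. V x $ k $ j \<partial>lborel) = 0"
proof -
  obtain B where B: "B \<ge> 0" "\<forall>u\<le>1. \<bar>H 1 u\<bar> \<le> B" using H1_bound by blast
  define s where "s n x = (\<Sum>i\<in>UNIV. partial i (psiR k (real (Suc n))) x * V x $ i $ j)" for n x
  have z: "integral\<^sup>L lborel (s n) = 0" for n
    using wd psiR_test[of "real (Suc n)" k] unfolding weak_div_zero_def s_def by auto
  have pc: "continuous_on UNIV (partial i (psiR k R))" for i R
    using SM_Ck[OF psiR_SM, of "Suc 0" k R] by simp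
  have pm: "partial i (psiR k R) \<in> borel_measurable lborel" for i R
    using borel_measurable_continuous_onI[OF pc] by simp
  have vm: "(\<lambda>x. V x $ i $ j) \<in> borel_measurable lborel" for i j
    using int by auto
  have meas: "s n \<in> borel_measurable lborel" for n
    unfolding s_def
    by (intro borel_measurable_sum borel_measurable_times pm vm)
  have lim: "(\<lambda>n. integral\<^sup>L lborel (s n)) \<longlonglongrightarrow> (\<integral>x. H 0 1 * V x $ k $ j \<partial>lborel)"
  proof (rule integral_dominated_convergence[where w="\<lambda>x. \<Sum>i\<in>UNIV. (1 + 2 * B) * \<bar>V x $ i $ j\<bar>"])
    show "(\<lambda>x. H 0 1 * V x $ k $ j) \<in> borel_measurable lborel" using int by auto
    show "s n \<in> borel_measurable lborel" for n by (rule meas)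
    show "integrable lborel (\<lambda>x. \<Sum>i\<in>UNIV. (1 + 2 * B) * \<bar>V x $ i $ j\<bar>)"
      by (rule Bochner_Integration.integrable_sum) (intro integrable_mult_right integrable_abs int)
    show "AE x in lborel. (\<lambda>n. s n x) \<longlonglongrightarrow> H 0 1 * V x $ k $ j"
    proof (rule AE_I2)
      fix x
      have "(\<lambda>n. s n x) \<longlonglongrightarrow> (\<Sum>i\<in>UNIV. ((if i = k then 1 else 0) * H 0 1) * V x $ i $ j)"
        unfolding s_def by (intro tendsto_intros partial_psiR_lim)
      also have "(\<Sum>i\<in>UNIV. ((if i = k then 1 else 0) * H 0 1) * V x $ i $ j) = H 0 1 * V x $ k $ j"
      proof -
        have "(\<Sum>i\<in>UNIV. ((if i = k then 1 else 0) * H 0 1) * V x $ i $ j)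
            = (\<Sum>i\<in>UNIV. if i = k then H 0 1 * V x $ k $ j else 0)"
          by (rule sum.cong) auto
        then show ?thesis by simp
      qed
      finally show "(\<lambda>n. s n x) \<longlonglongrightarrow> H 0 1 * V x $ k $ j" .
    qed
    show "AE x in lborel. norm (s n x) \<le> (\<Sum>i\<in>UNIV. (1 + 2 * B) * \<bar>V x $ i $ j\<bar>)" for n
    proof (rule AE_I2)
      fix x
      have "norm (s n x) \<le> (\<Sum>i\<in>UNIV. \<bar>partial i (psiR k (real (Suc n))) x * V x $ i $ j\<bar>)"
        unfolding s_def real_norm_def by (rule sum_abs)
      also have "\<dots> \<le> (\<Sum>i\<in>UNIV. (1 + 2 * B) * \<bar>V x $ i $ j\<bar>)"
        using partial_psiR_bound[OF _ B(2) B(1), of "real (Suc n)"]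
        by (intro sum_mono) (auto simp: abs_mult intro!: mult_right_mono simp del: of_nat_Suc)
      finally show "norm (s n x) \<le> (\<Sum>i\<in>UNIV. (1 + 2 * B) * \<bar>V x $ i $ j\<bar>)" .
    qed
  qed
  then have "(\<lambda>n. 0) \<longlonglongrightarrow> (\<integral>x. H 0 1 * V x $ k $ j \<partial>lborel)" using z by simp
  then have "(\<integral>x. H 0 1 * V x $ k $ j \<partial>lborel) = 0" using LIMSEQ_unique tendsto_const by blast
  moreover have "H 0 1 \<noteq> 0" by (simp add: H_def)
  ultimately show ?thesis by simp
qed

lemma vec_lambda_meas:
  "(\<And>i. (\<lambda>x. g i x) \<in> borel_measurable M) \<Longrightarrow> (\<lambda>x. (\<chi> i. g i x) :: real^'n) \<in> borel_measurable M"
  unfolding borel_measurable_euclidean_space[where 'c="real^'n"]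
  by (auto simp: Basis_vec_def inner_axis)

lemma vec_lambda_meas2:
  "(\<And>i j. (\<lambda>x. g i j x) \<in> borel_measurable M) \<Longrightarrow> (\<lambda>x. (\<chi> i j. g i j x) :: real^'n^'m) \<in> borel_measurable M"
  unfolding borel_measurable_euclidean_space[where 'c="real^'n^'m"]
  by (auto simp: Basis_vec_def inner_axis intro!: vec_lambda_meas)

lemma nth_meas: "f \<in> borel_measurable M \<Longrightarrow> (\<lambda>x. (f x :: 'a::euclidean_space^'n) $ i) \<in> borel_measurable M"
  using measurable_compose[of f M borel "\<lambda>v. v $ i" borel]
  by (simp add: borel_measurable_continuous_onI linear_continuous_on[OF bounded_linear_vec_nth] o_def)

lemma outer_meas:
  "f \<in> borel_measurable M \<Longrightarrow> g \<in> borel_measurable M \<Longrightarrow> (\<lambda>x. outer (f x) (g x)) \<in> borel_measurable M"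
  unfolding outer_def by (intro vec_lambda_meas2 borel_measurable_times nth_meas)

lemma integrable_nth: "integrable M f \<Longrightarrow> integrable M (\<lambda>x. (f x :: 'a::euclidean_space^'n) $ i)"
  by (rule integrable_bounded_linear[OF bounded_linear_vec_nth])

lemma integral_nth: "integrable M f \<Longrightarrow> (\<integral>x. (f x :: 'a::euclidean_space^'n) $ i \<partial>M) = integral\<^sup>L M f $ i"
  by (rule integral_bounded_linear[OF bounded_linear_vec_nth])

lemma reynolds_nn: "(reynolds C v t x) $ k $ k = C t x $ k $ k - (v t x $ k)^2"
  by (simp add: reynolds_def outer_def power2_eq_square)

lemma set_integral_nth:
  fixes f :: "'b \<Rightarrow> 'a::euclidean_space^'n"
  assumes "integrable M f" "A \<in> sets M"
  shows "(LINT x:A|M. f x) $ k = (LINT x:A|M. f x $ k)"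
  unfolding set_lebesgue_integral_def
  using integral_nth[OF integrable_mult_indicator[OF assms(2,1)], of k] by simp

lemma cond_exp_set:
  fixes Z :: "'a \<Rightarrow> 'c::euclidean_space" and Y :: "'a \<Rightarrow> 'b::euclidean_space"
  assumes ce: "cond_exp_given M Y Z g" and B: "B \<in> sets borel"
  shows "(LINT \<omega>:(Y -` B \<inter> space M)|M. Z \<omega>) = (LINT \<omega>:(Y -` B \<inter> space M)|M. g (Y \<omega>))"
proof -
  have Ym[measurable]: "Y \<in> borel_measurable M" and gm[measurable]: "g \<in> borel_measurable borel"
    using ce unfolding cond_exp_given_def by auto
  have "(LINT \<omega>:(Y -` B \<inter> space M)|M. Z \<omega>) = (LINT y:B|distr M borel Y. g y)"
    using ce B unfolding cond_exp_given_def by auto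
  also have "\<dots> = (\<integral>\<omega>. indicator B (Y \<omega>) *\<^sub>R g (Y \<omega>) \<partial>M)"
    unfolding set_lebesgue_integral_def using B by (subst integral_distr) auto
  also have "\<dots> = (LINT \<omega>:(Y -` B \<inter> space M)|M. g (Y \<omega>))"
    unfolding set_lebesgue_integral_def
    by (rule Bochner_Integration.integral_cong) (auto split: split_indicator)
  finally show ?thesis .
qed

lemma le_1_sq: "(x::real) \<le> 1 + x^2"
proof (cases "x \<le> 1")
  case True then show ?thesis by (smt (verit) zero_le_power2)
next
  case False then have "1 * x \<le> x * x" by (intro mult_right_mono) auto
  then show ?thesis by (simp add: power2_eq_square)
qed
lemma abs_prod_le: "\<bar>(a::real) * b\<bar> \<le> a * a + b * b"
proof -
  have "0 \<le> (\<bar>a\<bar> - \<bar>b\<bar>)^2" by simp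
  then have "2 * (\<bar>a\<bar> * \<bar>b\<bar>) \<le> a * a + b * b" by (simp add: power2_eq_square algebra_simps abs_mult_self_eq)
  moreover have "0 \<le> \<bar>a\<bar> * \<bar>b\<bar>" by simp
  ultimately have "\<bar>a\<bar> * \<bar>b\<bar> \<le> a * a + b * b" by linarith
  then show ?thesis by (simp add: abs_mult)
qed

lemma part1:
  fixes \<gamma> :: "((real^'n) \<times> (real^'n)) measure" and \<rho>0 :: "real^'n \<Rightarrow> real"
    and v0 :: "real^'n \<Rightarrow> real^'n" and C0 :: "real^'n \<Rightarrow> real^'n^'n"
  assumes ps: "prob_space \<gamma>" and sg: "sets \<gamma> = sets borel"
    and P0: "distr \<gamma> borel fst = P0" and P1: "distr \<gamma> borel snd = P1"
    and rho_m: "\<rho>0 \<in> borel_measurable borel" and rho_nn: "\<forall>x. 0 \<le> \<rho>0 x"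
    and dens: "distr \<gamma> lborel fst = density lborel (\<lambda>x. ennreal (\<rho>0 x))"
    and cv: "cond_exp_given \<gamma> fst vel v0"
    and cC: "cond_exp_given \<gamma> fst (\<lambda>p. outer (vel p) (vel p)) C0"
    and mom: "integrable \<gamma> (\<lambda>p. (norm (C0 (fst p) - outer (v0 (fst p)) (v0 (fst p))))\<^sup>2)"
    and wd: "weak_div_zero (\<lambda>x. \<rho>0 x *\<^sub>R (C0 x - outer (v0 x) (v0 x)))"
  shows "\<exists>T. T \<in> borel_measurable borel \<and> distr P0 borel T = P1 \<and> distr P0 borel (\<lambda>x. (x, T x)) = \<gamma>"
proof -
  interpret prob_space \<gamma> by (rule ps)
  define Pi where "Pi x = C0 x - outer (v0 x) (v0 x)" for x
  have gm: "f \<in> measurable borel N \<Longrightarrow> f \<in> measurable \<gamma> N" for f :: "_ \<Rightarrow> 'z" and N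
    using measurable_cong_sets[OF sg refl] by blast
  have fstm[measurable]: "fst \<in> measurable \<gamma> borel"
    by (rule gm) (simp add: borel_measurable_continuous_onI continuous_on_fst)
  have sndm[measurable]: "snd \<in> measurable \<gamma> borel"
    by (rule gm) (simp add: borel_measurable_continuous_onI continuous_on_snd)
  have v0m[measurable]: "v0 \<in> borel_measurable borel" and intV: "integrable \<gamma> vel"
    and intv: "integrable (distr \<gamma> borel fst) v0"
    using cv unfolding cond_exp_given_def by auto
  have C0m[measurable]: "C0 \<in> borel_measurable borel" and intVV: "integrable \<gamma> (\<lambda>p. outer (vel p) (vel p))"
    and intC: "integrable (distr \<gamma> borel fst) C0"
    using cC unfolding cond_exp_given_def by auto
  have Pim[measurable]: "Pi \<in> borel_measurable borel"
    unfolding Pi_def by (intro borel_measurable_diff outer_meas v0m C0m)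
  have velm[measurable]: "vel \<in> borel_measurable \<gamma>" using intV by auto
  have intv': "integrable \<gamma> (\<lambda>p. v0 (fst p))" using intv integrable_distr_eq[OF fstm v0m] by simp
  have intC': "integrable \<gamma> (\<lambda>p. C0 (fst p))" using intC integrable_distr_eq[OF fstm C0m] by simp
  have Vk2: "integrable \<gamma> (\<lambda>p. vel p $ k * vel p $ k)" for k
    using integrable_nth[OF integrable_nth[OF intVV, of k], of k] by (simp add: outer_def)
  have Ckk: "integrable \<gamma> (\<lambda>p. C0 (fst p) $ i $ j)" for i j
    using integrable_nth[OF integrable_nth[OF intC', of i], of j] by simp
  have Pij: "integrable \<gamma> (\<lambda>p. Pi (fst p) $ i $ j)" for i j
  proof (rule Bochner_Integration.integrable_bound[OF _ _ AE_I2])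
    show "integrable \<gamma> (\<lambda>p. 1 + (norm (Pi (fst p)))\<^sup>2)"
      using mom unfolding Pi_def by (intro Bochner_Integration.integrable_add) auto
    show "(\<lambda>p. Pi (fst p) $ i $ j) \<in> borel_measurable \<gamma>"
      by (intro nth_meas measurable_compose[OF fstm Pim])
    fix p
    have "\<bar>Pi (fst p) $ i $ j\<bar> \<le> norm (Pi (fst p) $ i)" by (rule component_le_norm_cart)
    also have "\<dots> \<le> norm (Pi (fst p))" by (rule Finite_Cartesian_Product.norm_nth_le)
    also have "\<dots> \<le> 1 + (norm (Pi (fst p)))\<^sup>2"
      by (rule le_1_sq)
    finally show "norm (Pi (fst p) $ i $ j) \<le> norm (1 + (norm (Pi (fst p)))\<^sup>2)" by simp
  qed
  have vk2: "integrable \<gamma> (\<lambda>p. v0 (fst p) $ k * v0 (fst p) $ k)" for k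
  proof -
    have "integrable \<gamma> (\<lambda>p. C0 (fst p) $ k $ k - Pi (fst p) $ k $ k)"
      using Ckk Pij by auto
    then show ?thesis by (simp add: Pi_def outer_def)
  qed
  have EC: "(\<integral>p. vel p $ k * vel p $ k \<partial>\<gamma>) = (\<integral>p. C0 (fst p) $ k $ k \<partial>\<gamma>)" for k
  proof -
    have "(LINT \<omega>:(fst -` UNIV \<inter> space \<gamma>)|\<gamma>. outer (vel \<omega>) (vel \<omega>)) = (LINT \<omega>:(fst -` UNIV \<inter> space \<gamma>)|\<gamma>. C0 (fst \<omega>))"
      by (rule cond_exp_set[OF cC]) simp
    then have "(\<integral>\<omega>. outer (vel \<omega>) (vel \<omega>) \<partial>\<gamma>) = (\<integral>\<omega>. C0 (fst \<omega>) \<partial>\<gamma>)"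
      using set_integral_space[OF intVV] set_integral_space[OF intC'] by simp
    then have "(\<integral>\<omega>. outer (vel \<omega>) (vel \<omega>) \<partial>\<gamma>) $ k $ k = (\<integral>\<omega>. C0 (fst \<omega>) \<partial>\<gamma>) $ k $ k" by simp
    then show ?thesis
      using integral_nth[OF integrable_nth[OF intVV, of k], of k] integral_nth[OF intVV, of k]
        integral_nth[OF integrable_nth[OF intC', of k], of k] integral_nth[OF intC', of k]
      by (simp add: outer_def)
  qed
  define F where "F = vimage_algebra (space \<gamma>) fst (borel :: (real^'n) measure)"
  have sF: "sets F = {fst -` A \<inter> space \<gamma> | A. A \<in> sets borel}"
    unfolding F_def by (rule sets_vimage_algebra2) simp
  have subalg: "subalgebra \<gamma> F"
    unfolding subalgebra_def using sF measurable_sets[OF fstm] by (auto simp: F_def)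
  interpret S: finite_measure_subalgebra \<gamma> F
    by unfold_locales (rule subalg)
  have vkF: "(\<lambda>p. v0 (fst p) $ k) \<in> borel_measurable F" for k
    unfolding F_def
    by (rule measurable_compose[OF measurable_vimage_algebra1 nth_meas[OF v0m]]) simp
  have charact: "AE p in \<gamma>. real_cond_exp \<gamma> F (\<lambda>p. vel p $ k) p = v0 (fst p) $ k" for k
  proof (rule S.real_cond_exp_charact)
    fix A assume "A \<in> sets F"
    then obtain B where B: "B \<in> sets borel" "A = fst -` B \<inter> space \<gamma>" using sF by auto
    then have Ag: "A \<in> sets \<gamma>" using measurable_sets[OF fstm] by auto
    have "(LINT \<omega>:A|\<gamma>. vel \<omega>) = (LINT \<omega>:A|\<gamma>. v0 (fst \<omega>))"
      unfolding B(2) by (rule cond_exp_set[OF cv B(1)])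
    then have "(LINT \<omega>:A|\<gamma>. vel \<omega>) $ k = (LINT \<omega>:A|\<gamma>. v0 (fst \<omega>)) $ k" by simp
    then show "(LINT \<omega>:A|\<gamma>. vel \<omega> $ k) = (LINT \<omega>:A|\<gamma>. v0 (fst \<omega>) $ k)"
      using set_integral_nth[OF intV Ag, of k] set_integral_nth[OF intv' Ag, of k] by simp
  next
    show "integrable \<gamma> (\<lambda>p. vel p $ k)" by (rule integrable_nth[OF intV])
    show "integrable \<gamma> (\<lambda>p. v0 (fst p) $ k)" by (rule integrable_nth[OF intv'])
    show "(\<lambda>p. v0 (fst p) $ k) \<in> borel_measurable F" by (rule vkF)
  qed
  have ip: "integrable \<gamma> (\<lambda>p. v0 (fst p) $ k * vel p $ k)" for k
  proof (rule Bochner_Integration.integrable_bound[OF _ _ AE_I2])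
    show "integrable \<gamma> (\<lambda>p. v0 (fst p) $ k * v0 (fst p) $ k + vel p $ k * vel p $ k)"
      using vk2 Vk2 by auto
    show "(\<lambda>p. v0 (fst p) $ k * vel p $ k) \<in> borel_measurable \<gamma>"
      by (intro borel_measurable_times nth_meas velm measurable_compose[OF fstm v0m])
    fix p
    show "norm (v0 (fst p) $ k * vel p $ k) \<le> norm (v0 (fst p) $ k * v0 (fst p) $ k + vel p $ k * vel p $ k)"
      using abs_prod_le[of "v0 (fst p) $ k" "vel p $ k"]
        abs_ge_self[of "v0 (fst p) $ k * v0 (fst p) $ k + vel p $ k * vel p $ k"]
      unfolding real_norm_def by linarith
  qed
  have cross: "(\<integral>p. v0 (fst p) $ k * vel p $ k \<partial>\<gamma>) = (\<integral>p. v0 (fst p) $ k * v0 (fst p) $ k \<partial>\<gamma>)" for k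
  proof -
    have "(\<integral>p. v0 (fst p) $ k * vel p $ k \<partial>\<gamma>) = (\<integral>p. v0 (fst p) $ k * real_cond_exp \<gamma> F (\<lambda>p. vel p $ k) p \<partial>\<gamma>)"
      using S.real_cond_exp_intg(2)[OF ip[of k] vkF] nth_meas[OF velm] by simp
    also have "\<dots> = (\<integral>p. v0 (fst p) $ k * v0 (fst p) $ k \<partial>\<gamma>)"
      by (rule integral_cong_AE) (use charact[of k] in \<open>auto intro!: borel_measurable_times nth_meas measurable_compose[OF fstm v0m]\<close>)
    finally show ?thesis .
  qed
  have PiK: "(\<integral>p. Pi (fst p) $ k $ k \<partial>\<gamma>) = 0" for k
  proof -
    have fl: "fst \<in> measurable \<gamma> lborel" by simp
    have ib: "integrable lborel (\<lambda>x. (\<rho>0 x *\<^sub>R Pi x) $ i $ j)" for i j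
    proof -
      have "integrable (distr \<gamma> lborel fst) (\<lambda>x. Pi x $ i $ j)"
        using Pij[of i j] integrable_distr_eq[OF fl, of "\<lambda>x. Pi x $ i $ j"] by (simp add: nth_meas)
      then have "integrable (density lborel (\<lambda>x. ennreal (\<rho>0 x))) (\<lambda>x. Pi x $ i $ j)" using dens by simp
      then show ?thesis
        using integrable_density[of "\<lambda>x. Pi x $ i $ j" lborel \<rho>0] rho_m rho_nn by (simp add: nth_meas)
    qed
    have "(\<integral>p. Pi (fst p) $ k $ k \<partial>\<gamma>) = (\<integral>x. Pi x $ k $ k \<partial>distr \<gamma> lborel fst)"
      by (rule integral_distr[OF fl, symmetric]) (simp add: nth_meas)
    also have "\<dots> = (\<integral>x. Pi x $ k $ k \<partial>density lborel (\<lambda>x. ennreal (\<rho>0 x)))" using dens by simp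
    also have "\<dots> = (\<integral>x. (\<rho>0 x *\<^sub>R Pi x) $ k $ k \<partial>lborel)"
      using integral_density[of "\<lambda>x. Pi x $ k $ k" lborel \<rho>0] rho_m rho_nn by (simp add: nth_meas)
    also have "\<dots> = 0"
      by (rule div_zero_moment[OF _ ib]) (use wd in \<open>simp add: Pi_def\<close>)
    finally show ?thesis .
  qed
  have sq: "(\<integral>p. (vel p $ k - v0 (fst p) $ k)\<^sup>2 \<partial>\<gamma>) = 0" for k
  proof -
    have "(\<integral>p. (vel p $ k - v0 (fst p) $ k)\<^sup>2 \<partial>\<gamma>)
        = (\<integral>p. vel p $ k * vel p $ k - 2 * (v0 (fst p) $ k * vel p $ k) + v0 (fst p) $ k * v0 (fst p) $ k \<partial>\<gamma>)"
      by (rule Bochner_Integration.integral_cong[OF refl]) (simp add: power2_eq_square algebra_simps)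
    also have "\<dots> = (\<integral>p. vel p $ k * vel p $ k \<partial>\<gamma>) - 2 * (\<integral>p. v0 (fst p) $ k * vel p $ k \<partial>\<gamma>)
        + (\<integral>p. v0 (fst p) $ k * v0 (fst p) $ k \<partial>\<gamma>)"
      using Bochner_Integration.integral_add[OF Bochner_Integration.integrable_diff[OF Vk2[of k] integrable_mult_right[OF ip[of k], of 2]] vk2[of k]]
        Bochner_Integration.integral_diff[OF Vk2[of k] integrable_mult_right[OF ip[of k], of 2]]
        integral_mult_right_zero[of \<gamma> 2 "\<lambda>p. v0 (fst p) $ k * vel p $ k"]
      by simp
    also have "\<dots> = (\<integral>p. C0 (fst p) $ k $ k \<partial>\<gamma>) - (\<integral>p. v0 (fst p) $ k * v0 (fst p) $ k \<partial>\<gamma>)"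
      unfolding EC cross by linarith
    also have "\<dots> = (\<integral>p. Pi (fst p) $ k $ k \<partial>\<gamma>)"
    proof -
      have "(\<integral>p. Pi (fst p) $ k $ k \<partial>\<gamma>) = (\<integral>p. C0 (fst p) $ k $ k - v0 (fst p) $ k * v0 (fst p) $ k \<partial>\<gamma>)"
        by (simp add: Pi_def outer_def)
      also have "\<dots> = (\<integral>p. C0 (fst p) $ k $ k \<partial>\<gamma>) - (\<integral>p. v0 (fst p) $ k * v0 (fst p) $ k \<partial>\<gamma>)"
        by (rule Bochner_Integration.integral_diff[OF Ckk vk2])
      finally show ?thesis by simp
    qed
    finally show ?thesis unfolding PiK .
  qed
  have AEk: "AE p in \<gamma>. vel p $ k = v0 (fst p) $ k" for k
  proof -
    have "integrable \<gamma> (\<lambda>p. vel p $ k * vel p $ k - 2 * (v0 (fst p) $ k * vel p $ k) + v0 (fst p) $ k * v0 (fst p) $ k)"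
      using Vk2[of k] ip[of k] vk2[of k] by auto
    then have "integrable \<gamma> (\<lambda>p. (vel p $ k - v0 (fst p) $ k)\<^sup>2)"
      by (simp add: power2_eq_square algebra_simps)
    from integral_nonneg_eq_0_iff_AE[OF this] sq[of k]
    have "AE p in \<gamma>. (vel p $ k - v0 (fst p) $ k)\<^sup>2 = 0" by simp
    then show ?thesis by auto
  qed
  have AEv: "AE p in \<gamma>. snd p = fst p + v0 (fst p)"
  proof -
    have "AE p in \<gamma>. \<forall>k\<in>UNIV. vel p $ k = v0 (fst p) $ k"
      by (rule AE_finite_allI) (simp_all add: AEk)
    then show ?thesis by eventually_elim (auto simp: vec_eq_iff vel_def algebra_simps)
  qed
  define T where "T x = x + v0 x" for x
  have Tm[measurable]: "T \<in> borel_measurable borel" unfolding T_def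
    by (intro borel_measurable_add measurable_ident_sets v0m) simp
  show ?thesis
  proof (intro exI[of _ T] conjI Tm)
    have "distr P0 borel T = distr \<gamma> borel (T \<circ> fst)"
      unfolding P0[symmetric] by (rule distr_distr) auto
    also have "\<dots> = distr \<gamma> borel snd"
      by (rule distr_cong_AE) (use AEv in \<open>auto simp: T_def\<close>)
    finally show "distr P0 borel T = P1" using P1 by simp
    have "distr P0 borel (\<lambda>x. (x, T x)) = distr \<gamma> borel ((\<lambda>x. (x, T x)) \<circ> fst)"
      unfolding P0[symmetric] by (rule distr_distr) auto
    also have "\<dots> = distr \<gamma> borel (\<lambda>p. p)"
      by (rule distr_cong_AE) (use AEv in \<open>auto simp: T_def gm\<close>)
    also have "\<dots> = \<gamma>" by (rule distr_id2) (simp add: sg)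
    finally show "distr P0 borel (\<lambda>x. (x, T x)) = \<gamma>" .
  qed
qed

lemma set_integral_distr_Y:
  fixes h :: "'b::euclidean_space \<Rightarrow> 'c::euclidean_space"
  assumes Ym[measurable]: "Y \<in> borel_measurable M" and hm[measurable]: "h \<in> borel_measurable borel"
    and B: "B \<in> sets borel"
  shows "(LINT y:B|distr M borel Y. h y) = (LINT \<omega>:(Y -` B \<inter> space M)|M. h (Y \<omega>))"
proof -
  have "(LINT y:B|distr M borel Y. h y) = (\<integral>\<omega>. indicator B (Y \<omega>) *\<^sub>R h (Y \<omega>) \<partial>M)"
    unfolding set_lebesgue_integral_def using B by (subst integral_distr) auto
  also have "\<dots> = (LINT \<omega>:(Y -` B \<inter> space M)|M. h (Y \<omega>))"
    unfolding set_lebesgue_integral_def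
    by (rule Bochner_Integration.integral_cong) (auto split: split_indicator)
  finally show ?thesis .
qed

lemma set_integral_inner:
  fixes f :: "'a \<Rightarrow> 'c::euclidean_space"
  assumes "integrable M f" "A \<in> sets M"
  shows "(LINT x:A|M. f x) \<bullet> b = (LINT x:A|M. f x \<bullet> b)"
  unfolding set_lebesgue_integral_def
  using integral_inner_left[of b M "\<lambda>x. indicator A x *\<^sub>R f x"] integrable_mult_indicator[OF assms(2,1)]
  by simp

lemma cond_exp_unique:
  fixes Z :: "'a \<Rightarrow> 'c::euclidean_space" and Y :: "'a \<Rightarrow> 'b::euclidean_space"
  assumes ce: "cond_exp_given M Y Z g" and hm[measurable]: "h \<in> borel_measurable borel"
    and ae: "AE \<omega> in M. Z \<omega> = h (Y \<omega>)"
  shows "AE y in distr M borel Y. g y = h y"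
proof -
  have Ym[measurable]: "Y \<in> borel_measurable M" and gm[measurable]: "g \<in> borel_measurable borel"
    and iZ: "integrable M Z" and ig: "integrable (distr M borel Y) g"
    using ce unfolding cond_exp_given_def by auto
  have ihY: "integrable M (\<lambda>\<omega>. h (Y \<omega>))"
    by (rule integrable_cong_AE_imp[OF iZ _ ae]) (rule measurable_compose[OF Ym hm])
  have ih: "integrable (distr M borel Y) h" by (subst integrable_distr_eq[OF Ym hm]) (rule ihY)
  have Zm: "Z \<in> borel_measurable M" using iZ by auto
  have ceA: "\<forall>A\<in>sets borel. (LINT \<omega>:(Y -` A \<inter> space M)|M. Z \<omega>) = (LINT y:A|distr M borel Y. g y)"
    using ce unfolding cond_exp_given_def by blast
  have seq: "(LINT y:B|distr M borel Y. g y) = (LINT y:B|distr M borel Y. h y)" if B: "B \<in> sets borel" for B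
  proof -
    have "(LINT y:B|distr M borel Y. g y) = (LINT \<omega>:(Y -` B \<inter> space M)|M. Z \<omega>)"
      using ceA B by (rule_tac sym) blast
    also have "\<dots> = (LINT \<omega>:(Y -` B \<inter> space M)|M. h (Y \<omega>))"
      unfolding set_lebesgue_integral_def
      apply (rule integral_cong_AE)
      using ae measurable_sets[OF Ym B] Zm
      by (auto intro!: borel_measurable_scaleR borel_measurable_indicator measurable_compose[OF Ym hm])
    also have "\<dots> = (LINT y:B|distr M borel Y. h y)"
      by (rule set_integral_distr_Y[symmetric]) (auto simp: B)
    finally show ?thesis .
  qed
  have AEb: "AE y in distr M borel Y. g y \<bullet> b = h y \<bullet> b" if b: "b \<in> Basis" for b
  proof (rule density_unique_real)
    show "integrable (distr M borel Y) (\<lambda>y. g y \<bullet> b)" by (intro integrable_inner_left ig)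
    show "integrable (distr M borel Y) (\<lambda>y. h y \<bullet> b)" by (intro integrable_inner_left ih)
    fix A assume A: "A \<in> sets (distr M borel Y)"
    then have A': "A \<in> sets borel" by (simp only: sets_distr)
    show "(LINT y:A|distr M borel Y. g y \<bullet> b) = (LINT y:A|distr M borel Y. h y \<bullet> b)"
      unfolding set_integral_inner[OF ig A, of b, symmetric] set_integral_inner[OF ih A, of b, symmetric] seq[OF A'] ..
  qed
  have "AE y in distr M borel Y. \<forall>b\<in>Basis. g y \<bullet> b = h y \<bullet> b"
    by (rule AE_finite_allI) (auto intro: AEb)
  then show ?thesis by eventually_elim (metis euclidean_eqI)
qed

lemma det_core:
  fixes \<gamma> :: "((real^'n) \<times> (real^'n)) measure" and P0 :: "(real^'n) measure"
    and T :: "real^'n \<Rightarrow> real^'n" and \<rho>t :: "real^'n \<Rightarrow> real"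
    and vt :: "real^'n \<Rightarrow> real^'n" and Ct :: "real^'n \<Rightarrow> real^'n^'n"
  assumes sg: "sets \<gamma> = sets borel" and P0s: "sets P0 = sets borel"
    and gdef: "distr P0 borel (\<lambda>x. (x, T x)) = \<gamma>"
    and Tc: "continuous_on UNIV T"
    and Sc: "closed S" and AES: "AE x in P0. x \<in> S"
    and mono: "\<forall>x\<in>S. \<forall>y\<in>S. 0 \<le> (T x - T y) \<bullet> (x - y)"
    and t: "0 \<le> t" "t < 1"
    and rho_m: "\<rho>t \<in> borel_measurable borel" and rho_nn: "\<forall>x. 0 \<le> \<rho>t x"
    and dens: "distr \<gamma> lborel (interp t) = density lborel (\<lambda>x. ennreal (\<rho>t x))"
    and cv: "cond_exp_given \<gamma> (interp t) vel vt"
    and cC: "cond_exp_given \<gamma> (interp t) (\<lambda>p. outer (vel p) (vel p)) Ct"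
  shows "weak_div_zero (\<lambda>x. \<rho>t x *\<^sub>R (Ct x - outer (vt x) (vt x)))"
proof -
  define F where "F x = (1 - t) *\<^sub>R x + t *\<^sub>R T x" for x
  have lower: "(1 - t) * norm (x - y) \<le> norm (F x - F y)" if "x \<in> S" "y \<in> S" for x y
  proof (cases "x = y")
    case True then show ?thesis by simp
  next
    case False
    have "(F x - F y) \<bullet> (x - y) = (1 - t) * ((x - y) \<bullet> (x - y)) + t * ((T x - T y) \<bullet> (x - y))"
      unfolding F_def by (simp add: algebra_simps inner_diff_left inner_add_left)
    also have "\<dots> \<ge> (1 - t) * ((x - y) \<bullet> (x - y))"
      using mono that t by (simp add: mult_nonneg_nonneg)
    finally have "(1 - t) * (norm (x - y) * norm (x - y)) \<le> norm (F x - F y) * norm (x - y)"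
      using norm_cauchy_schwarz[of "F x - F y" "x - y"]
      by (simp add: dot_square_norm power2_eq_square)
    moreover have "norm (x - y) > 0" using False by simp
    ultimately show ?thesis by (simp add: mult.assoc[symmetric])
  qed
  have injF: "inj_on F S"
  proof (rule inj_onI)
    fix x y assume "x \<in> S" "y \<in> S" "F x = F y"
    then have "(1 - t) * norm (x - y) \<le> 0" using lower by fastforce
    then show "x = y" using t by (simp add: mult_le_0_iff)
  qed
  have Fc: "continuous_on UNIV F" unfolding F_def by (intro continuous_intros Tc)
  define K where "K = F ` S"
  define G where "G = inv_into S F"
  have GF: "G (F x) = x" if "x \<in> S" for x unfolding G_def using injF that by simp
  have GK: "G y \<in> S" "F (G y) = y" if "y \<in> K" for y
    unfolding G_def using that by (auto simp: K_def inv_into_into f_inv_into_f)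
  have Glip: "norm (G y - G y') \<le> norm (y - y') / (1 - t)" if "y \<in> K" "y' \<in> K" for y y'
    using lower[OF GK(1)[OF that(1)] GK(1)[OF that(2)]] GK(2)[OF that(1)] GK(2)[OF that(2)] t
    by (simp add: field_simps)
  have Gc: "continuous_on K G"
  proof (rule lipschitz_on_continuous_on)
    show "(1 / (1 - t))-lipschitz_on K G"
      unfolding lipschitz_on_def using Glip t by (auto simp: dist_norm)
  qed
  have Kc: "closed K"
    unfolding closed_sequential_limits
  proof (intro allI impI, elim conjE)
    fix s l assume s: "\<forall>n. s n \<in> K" and sl: "s \<longlonglongrightarrow> l"
    define xs where "xs n = G (s n)" for n
    have xsS: "xs n \<in> S" for n using GK s by (simp add: xs_def)
    have "Cauchy xs"
    proof (rule metric_CauchyI)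
      fix e :: real assume e: "e > 0"
      have "Cauchy s" using sl by (rule LIMSEQ_imp_Cauchy)
      then obtain M where M: "\<forall>m\<ge>M. \<forall>n\<ge>M. dist (s m) (s n) < e * (1 - t)"
        using e t by (meson metric_CauchyD mult_pos_pos diff_gt_0_iff_gt)
      show "\<exists>M. \<forall>m\<ge>M. \<forall>n\<ge>M. dist (xs m) (xs n) < e"
      proof (intro exI allI impI)
        fix m n assume "M \<le> m" "M \<le> n"
        then have "norm (s m - s n) < e * (1 - t)" using M by (simp add: dist_norm)
        then have "norm (s m - s n) / (1 - t) < e" using t by (simp add: field_simps)
        then show "dist (xs m) (xs n) < e"
          using Glip[OF s[rule_format, of m] s[rule_format, of n]] by (simp add: xs_def dist_norm)
      qed
    qed
    then obtain x where x: "xs \<longlonglongrightarrow> x" using convergent_eq_Cauchy by blast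
    have "x \<in> S" using Sc xsS x closed_sequentially by blast
    moreover have "(\<lambda>n. F (xs n)) \<longlonglongrightarrow> F x"
      by (rule continuous_on_tendsto_compose[OF Fc x]) auto
    moreover have "F (xs n) = s n" for n using GK s by (simp add: xs_def)
    ultimately show "l \<in> K" using sl LIMSEQ_unique unfolding K_def by fastforce
  qed
  define h where "h y = indicator K y *\<^sub>R (T (G y) - G y)" for y
  have hm: "h \<in> borel_measurable borel"
    unfolding h_def
  proof (rule borel_measurable_continuous_on_indicator)
    show "K \<in> sets borel" using Kc by simp
    show "continuous_on K (\<lambda>y. T (G y) - G y)"
      by (intro continuous_intros continuous_on_compose2[OF Tc Gc]) (auto simp: Gc)
  qed
  have hF: "h (F x) = T x - x" if "x \<in> S" for x
    using that GF by (simp add: h_def K_def)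
  text \<open>vel is a function of X_t\<close>
  have interpm: "interp t \<in> borel_measurable borel"
    unfolding interp_def by (intro borel_measurable_continuous_onI continuous_intros)
  have velm: "vel \<in> borel_measurable borel"
    unfolding vel_def by (intro borel_measurable_continuous_onI continuous_intros)
  have mapm: "(\<lambda>x. (x, T x)) \<in> measurable P0 borel"
    by (subst measurable_cong_sets[OF P0s refl]) (intro borel_measurable_continuous_onI continuous_on_Pair continuous_on_id Tc)
  have setm: "{p \<in> space borel. vel p = h (interp t p)} \<in> sets borel"
    using hm interpm velm by measurable
  have AEg: "AE p in \<gamma>. vel p = h (interp t p)"
  proof -
    have "AE x in P0. vel (x, T x) = h (interp t (x, T x))"
      using AES
    proof eventually_elim
      fix x assume "x \<in> S"
      then show "vel (x, T x) = h (interp t (x, T x))"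
        using hF by (simp add: vel_def interp_def F_def)
    qed
    then have "AE p in distr P0 borel (\<lambda>x. (x, T x)). vel p = h (interp t p)"
      using AE_distr_iff[OF mapm setm] by simp
    then show ?thesis unfolding gdef .
  qed
  have AEg2: "AE p in \<gamma>. outer (vel p) (vel p) = outer (h (interp t p)) (h (interp t p))"
    using AEg by eventually_elim simp
  have ohm: "(\<lambda>y. outer (h y) (h y)) \<in> borel_measurable borel" by (intro outer_meas hm)
  have Uv: "AE y in distr \<gamma> borel (interp t). vt y = h y"
    by (rule cond_exp_unique[OF cv hm AEg])
  have UC: "AE y in distr \<gamma> borel (interp t). Ct y = outer (h y) (h y)"
    by (rule cond_exp_unique[OF cC ohm AEg2])
  have de: "distr \<gamma> borel (interp t) = density lborel (\<lambda>x. ennreal (\<rho>t x))"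
    unfolding dens[symmetric] by (rule distr_cong) auto
  have "AE y in density lborel (\<lambda>x. ennreal (\<rho>t x)). Ct y - outer (vt y) (vt y) = 0"
    using Uv UC unfolding de by eventually_elim simp
  then have "AE y in lborel. 0 < \<rho>t y \<longrightarrow> Ct y - outer (vt y) (vt y) = 0"
    using AE_density[of "\<lambda>x. ennreal (\<rho>t x)" lborel] rho_m by simp
  then have AE0: "AE y in lborel. \<rho>t y *\<^sub>R (Ct y - outer (vt y) (vt y)) = 0"
  proof eventually_elim
    fix y assume "0 < \<rho>t y \<longrightarrow> Ct y - outer (vt y) (vt y) = 0"
    then show "\<rho>t y *\<^sub>R (Ct y - outer (vt y) (vt y)) = 0"
      using rho_nn[rule_format, of y] by (cases "\<rho>t y = 0") auto
  qed
  have vtm: "vt \<in> borel_measurable borel" and Ctm: "Ct \<in> borel_measurable borel"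
    using cv cC unfolding cond_exp_given_def by auto
  show ?thesis unfolding weak_div_zero_def
  proof (intro allI impI conjI)
    fix \<psi> :: "real^'n \<Rightarrow> real" and j
    assume tf: "test_fun \<psi>"
    have pc: "continuous_on UNIV (partial i \<psi>)" for i
      using tf unfolding test_fun_def by (metis Ck.simps(1) Ck.simps(2))
    let ?f = "\<lambda>x. \<Sum>i\<in>UNIV. partial i \<psi> x * (\<rho>t x *\<^sub>R (Ct x - outer (vt x) (vt x))) $ i $ j"
    have pm: "partial i \<psi> \<in> borel_measurable borel" for i using borel_measurable_continuous_onI[OF pc] .
    have Pm: "(\<lambda>x. \<rho>t x *\<^sub>R (Ct x - outer (vt x) (vt x))) \<in> borel_measurable borel"
      by (intro borel_measurable_scaleR rho_m borel_measurable_diff Ctm outer_meas vtm)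
    have fm0: "?f \<in> borel_measurable borel"
      by (intro borel_measurable_sum borel_measurable_times pm nth_meas Pm)
    then have fm: "?f \<in> borel_measurable lborel" by simp
    have ae: "AE x in lborel. 0 = ?f x"
      using AE0
    proof eventually_elim
      fix x assume z: "\<rho>t x *\<^sub>R (Ct x - outer (vt x) (vt x)) = 0"
      show "0 = ?f x" unfolding z by simp
    qed
    show "integrable lborel ?f" by (rule integrable_cong_AE_imp[OF integrable_zero fm ae])
    show "(\<integral>x. ?f x \<partial>lborel) = 0" using ae by (intro integral_eq_zero_AE) (auto elim: AE_mp)
  qed
qed

lemma psd_mono:
  fixes T :: "real^'n \<Rightarrow> real^'n"
  assumes A: "\<forall>x. T differentiable (at x) \<and> (\<forall>h. 0 \<le> h \<bullet> (jacobian T (at x) *v h))"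
  shows "0 \<le> (T x - T y) \<bullet> (x - y)"
proof -
  define d where "d = x - y"
  define g where "g s = T (y + s *\<^sub>R d) \<bullet> d" for s :: real
  have dg: "(g has_real_derivative ((jacobian T (at (y + s *\<^sub>R d)) *v d) \<bullet> d)) (at s)" for s
  proof -
    let ?z = "y + s *\<^sub>R d"
    let ?D = "\<lambda>h. jacobian T (at ?z) *v h"
    have dT: "(T has_derivative ?D) (at ?z)" using A jacobian_works by blast
    have dp: "((\<lambda>s. y + s *\<^sub>R d) has_derivative (\<lambda>ds. ds *\<^sub>R d)) (at s)"
      by (auto intro!: derivative_eq_intros)
    have "((\<lambda>s. T (y + s *\<^sub>R d)) has_derivative (\<lambda>ds. ?D (ds *\<^sub>R d))) (at s)"
      using has_derivative_compose[OF dp dT] by (simp add: o_def)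
    then have "(g has_derivative (\<lambda>ds. ?D (ds *\<^sub>R d) \<bullet> d)) (at s)"
      unfolding g_def by (rule has_derivative_inner_left)
    moreover have "(\<lambda>ds. ?D (ds *\<^sub>R d) \<bullet> d) = (*) ((jacobian T (at ?z) *v d) \<bullet> d)"
    proof (rule ext)
      fix ds :: real
      have "linear ?D" using has_derivative_bounded_linear[OF dT] bounded_linear.linear by blast
      then have "?D (ds *\<^sub>R d) = ds *\<^sub>R ?D d" by (rule linear_scale)
      then show "?D (ds *\<^sub>R d) \<bullet> d = (*) ((jacobian T (at ?z) *v d) \<bullet> d) ds" by simp
    qed
    ultimately show ?thesis unfolding has_field_derivative_def by simp
  qed
  have e: "\<exists>z. (g has_real_derivative z) (at s) \<and> 0 \<le> z" if "0 < s" "s < 1" for s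
    using dg[of s] A by (metis inner_commute)
  have c: "continuous_on {0..1} g"
    using dg by (meson DERIV_isCont continuous_at_imp_continuous_on)
  have "g 0 \<le> g 1" using DERIV_nonneg_imp_increasing_open[of 0 1 g, OF _ e c] by simp
  then show ?thesis unfolding g_def d_def by (simp add: inner_diff_left)
qed

lemma support_exists:
  fixes P :: "(real^'n) measure"
  assumes sP: "sets P = sets borel"
  shows "\<exists>S. closed S \<and> (AE x in P. x \<in> S) \<and> (\<forall>x\<in>S. \<forall>e>0. emeasure P (ball x e) \<noteq> 0)"
proof -
  define \<F> where "\<F> = {B :: (real^'n) set. open B \<and> emeasure P B = 0}"
  obtain \<F>' where F': "\<F>' \<subseteq> \<F>" "countable \<F>'" "\<Union>\<F>' = \<Union>\<F>"
    using Lindelof[of \<F>] unfolding \<F>_def by blast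
  have nul: "\<Union>\<F> \<in> null_sets P"
  proof -
    have "(\<Union>B\<in>\<F>'. B) \<in> null_sets P"
    proof (rule null_sets_UN')
      show "countable \<F>'" by (rule F'(2))
      fix B assume "B \<in> \<F>'"
      then have "open B" "emeasure P B = 0" using F'(1) unfolding \<F>_def by auto
      then show "B \<in> null_sets P" using sP by (simp add: null_sets_def)
    qed
    then show ?thesis using F'(3) by simp
  qed
  define S where "S = - \<Union>\<F>"
  have "closed S" unfolding S_def \<F>_def by (intro closed_Compl open_Union) auto
  moreover have "AE x in P. x \<in> S"
    by (rule AE_I'[OF nul]) (auto simp: S_def)
  moreover have "\<forall>x\<in>S. \<forall>e>0. emeasure P (ball x e) \<noteq> 0"
  proof (intro ballI allI impI notI)
    fix x e assume "x \<in> S" "(e::real) > 0" "emeasure P (ball x e) = 0"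
    then have "ball x e \<in> \<F>" unfolding \<F>_def by simp
    then show False using \<open>x \<in> S\<close> \<open>e > 0\<close> unfolding S_def by auto
  qed
  ultimately show ?thesis by blast
qed

lemma nbhd_neg:
  fixes T :: "real^'n \<Rightarrow> real^'n"
  assumes Tc: "continuous_on UNIV T" and neg: "(x - y) \<bullet> (T x - T y) < 0"
  shows "\<exists>\<delta>>0. ball x \<delta> \<inter> ball y \<delta> = {} \<and>
     (\<forall>a\<in>ball x \<delta>. \<forall>b\<in>ball y \<delta>. (a - b) \<bullet> (T a - T b) < 0)"
proof -
  define D where "D p = (fst p - snd p) \<bullet> (T (fst p) - T (snd p))" for p :: "(real^'n) \<times> (real^'n)"
  have Dc: "isCont D (x, y)"
  proof -
    have "continuous_on UNIV D" unfolding D_def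
      by (intro continuous_intros continuous_on_compose2[OF Tc]) auto
    then show ?thesis by (simp add: continuous_on_eq_continuous_at)
  qed
  have xy: "x \<noteq> y" using neg by auto
  obtain d where d: "d > 0" "\<forall>p. dist p (x, y) < d \<longrightarrow> dist (D p) (D (x, y)) < - D (x, y)"
  proof -
    have "- D (x, y) > 0" using neg by (simp add: D_def)
    then show ?thesis using Dc[unfolded continuous_at_eps_delta] that by blast
  qed
  define \<delta> where "\<delta> = min (d / 2) (dist x y / 2)"
  have \<delta>: "\<delta> > 0" using d xy by (simp add: \<delta>_def)
  show ?thesis
  proof (intro exI conjI ballI)
    show "\<delta> > 0" by (rule \<delta>)
    show "ball x \<delta> \<inter> ball y \<delta> = {}"
    proof (rule ccontr)
      assume "ball x \<delta> \<inter> ball y \<delta> \<noteq> {}"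
      then obtain z where "dist x z < \<delta>" "dist y z < \<delta>" by auto
      then have "dist x y < 2 * \<delta>" using dist_triangle3[of x y z] by (simp add: dist_commute)
      then show False by (simp add: \<delta>_def)
    qed
    fix a b assume a: "a \<in> ball x \<delta>" and b: "b \<in> ball y \<delta>"
    have "dist (a, b) (x, y) \<le> \<bar>dist a x\<bar> + \<bar>dist b y\<bar>"
      unfolding dist_Pair_Pair by (rule sqrt_sum_squares_le_sum_abs)
    also have "\<dots> < d"
    proof -
      have "dist a x < \<delta>" "dist b y < \<delta>" using a b by (auto simp: mem_ball dist_commute)
      then show ?thesis unfolding \<delta>_def by simp
    qed
    finally have "dist (D (a, b)) (D (x, y)) < - D (x, y)" using d by blast
    then have "D (a, b) < 0" by (simp add: dist_real_def)
    then show "(a - b) \<bullet> (T a - T b) < 0" by (simp add: D_def)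
  qed
qed

lemma sq_le2: "(norm ((a::real^'n) - b))\<^sup>2 \<le> 2 * (norm a)\<^sup>2 + 2 * (norm b)\<^sup>2"
proof -
  have "norm (a - b) \<le> norm a + norm b" by (rule norm_triangle_ineq4)
  then have "(norm (a - b))\<^sup>2 \<le> (norm a + norm b)\<^sup>2" by (simp add: power_mono)
  also have "\<dots> \<le> 2 * (norm a)\<^sup>2 + 2 * (norm b)\<^sup>2"
  proof -
    have "0 \<le> (norm a - norm b)\<^sup>2" by simp
    then show ?thesis by (simp add: power2_eq_square algebra_simps)
  qed
  finally show ?thesis .
qed

lemma swap_identity:
  fixes a b :: "real^'n"
  shows "((norm (a - T b))\<^sup>2 - (norm (a - T a))\<^sup>2) + ((norm (b - T a))\<^sup>2 - (norm (b - T b))\<^sup>2)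
     = 2 * ((a - b) \<bullet> (T a - T b))"
proof -
  have e: "(norm (u - v))\<^sup>2 = u \<bullet> u - 2 * (u \<bullet> v) + v \<bullet> v" for u v :: "real^'n"
    by (simp add: power2_norm_eq_inner inner_diff_left inner_diff_right inner_commute[of v u])
  show ?thesis unfolding e
    by (simp add: inner_diff_left inner_diff_right inner_commute[of "T a" b] inner_commute[of "T b" a])
qed

lemma ot_mono:
  fixes P0 P1 :: "(real^'n) measure" and T :: "real^'n \<Rightarrow> real^'n"
  assumes P0p: "prob_space P0" and P0s: "sets P0 = sets borel"
    and ot: "ot_map P0 P1 T" and Tc: "continuous_on UNIV T"
    and fin: "integrable P0 (\<lambda>x. (norm (x - T x))\<^sup>2)"
    and i1: "integrable P0 (\<lambda>x. (norm x)\<^sup>2)" and i2: "integrable P0 (\<lambda>x. (norm (T x))\<^sup>2)"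
    and xS: "\<forall>e>0. emeasure P0 (ball x e) \<noteq> 0" and yS: "\<forall>e>0. emeasure P0 (ball y e) \<noteq> 0"
  shows "0 \<le> (T x - T y) \<bullet> (x - y)"
proof (rule ccontr)
  assume "\<not> ?thesis"
  then have neg: "(x - y) \<bullet> (T x - T y) < 0" by (metis inner_commute not_le)
  obtain \<delta> where \<delta>: "\<delta> > 0" "ball x \<delta> \<inter> ball y \<delta> = {}"
    "\<forall>a\<in>ball x \<delta>. \<forall>b\<in>ball y \<delta>. (a - b) \<bullet> (T a - T b) < 0"
    using nbhd_neg[OF Tc neg] by blast
  define A where "A = ball x \<delta>"
  define B where "B = ball y \<delta>"
  have AB: "A \<inter> B = {}" using \<delta> by (simp add: A_def B_def)
  have Ab: "A \<in> sets borel" "B \<in> sets borel" by (simp_all add: A_def B_def)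
  have A0: "emeasure P0 A \<noteq> 0" "emeasure P0 B \<noteq> 0" using xS yS \<delta> by (simp_all add: A_def B_def)
  interpret P: prob_space P0 by (rule P0p)
  interpret PP: pair_prob_space P0 P0 by unfold_locales
  define \<mu> where "\<mu> = P0 \<Otimes>\<^sub>M P0"
  have s\<mu>: "sets \<mu> = sets (borel :: ((real^'n) \<times> (real^'n)) measure)"
  proof -
    have "sets \<mu> = sets (borel \<Otimes>\<^sub>M (borel :: (real^'n) measure))"
      unfolding \<mu>_def by (rule sets_pair_measure_cong[OF P0s P0s])
    then show ?thesis by (simp only: borel_prod)
  qed
  have sp\<mu>: "space \<mu> = UNIV" using sets_eq_imp_space_eq[OF s\<mu>] by simp
  have spP: "space P0 = UNIV" using sets_eq_imp_space_eq[OF P0s] by simp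
  have mm: "f \<in> measurable borel N \<Longrightarrow> f \<in> measurable \<mu> N" for f :: "_ \<Rightarrow> 'z" and N
    using measurable_cong_sets[OF s\<mu> refl] by blast
  have mP: "f \<in> measurable borel N \<Longrightarrow> f \<in> measurable P0 N" for f :: "_ \<Rightarrow> 'z" and N
    using measurable_cong_sets[OF P0s refl] by blast
  have Tm: "T \<in> borel_measurable borel" using Tc by (rule borel_measurable_continuous_onI)
  have fstb: "(fst :: (real^'n) \<times> (real^'n) \<Rightarrow> _) \<in> borel_measurable borel"
    by (intro borel_measurable_continuous_onI continuous_on_fst continuous_on_id)
  have sndb: "(snd :: (real^'n) \<times> (real^'n) \<Rightarrow> _) \<in> borel_measurable borel"
    by (intro borel_measurable_continuous_onI continuous_on_snd continuous_on_id)
  have Tfst: "(\<lambda>p. T (fst p)) \<in> borel_measurable (borel :: ((real^'n) \<times> (real^'n)) measure)"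
    by (intro borel_measurable_continuous_onI continuous_on_compose2[OF Tc] continuous_intros) auto
  have Tsnd: "(\<lambda>p. T (snd p)) \<in> borel_measurable (borel :: ((real^'n) \<times> (real^'n)) measure)"
    by (intro borel_measurable_continuous_onI continuous_on_compose2[OF Tc] continuous_intros) auto
  define W where "W = A \<times> B \<union> B \<times> A"
  have Wo: "open W" unfolding W_def A_def B_def by (intro open_Un open_Times) auto
  have Wb: "W \<in> sets borel" using Wo by simp
  have Wsym: "(b, a) \<in> W \<longleftrightarrow> (a, b) \<in> W" for a b unfolding W_def by auto
  define \<Phi> where "\<Phi> p = (fst p, if p \<in> W then T (snd p) else T (fst p))" for p :: "(real^'n) \<times> (real^'n)"
  have gm: "(\<lambda>p. if p \<in> W then T (snd p) else T (fst p)) \<in> borel_measurable borel"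
    by (rule measurable_If_set[OF Tsnd Tfst]) (simp add: Wb)
  have \<Phi>m: "\<Phi> \<in> measurable borel borel"
  proof -
    have "\<Phi> \<in> measurable borel (borel \<Otimes>\<^sub>M borel)"
      unfolding \<Phi>_def by (rule measurable_Pair[OF fstb gm])
    then show ?thesis by (simp only: borel_prod)
  qed
  define \<pi> where "\<pi> = distr \<mu> borel \<Phi>"
  have dfst: "distr \<mu> P0 fst = P0" unfolding \<mu>_def by (rule P.distr_pair_fst)
  have dfst': "distr \<mu> borel fst = P0"
    using dfst distr_cong[OF refl P0s[symmetric], of \<mu> fst fst] by simp
  have swap_meas: "emeasure \<mu> X = emeasure \<mu> ((\<lambda>(a, b). (b, a)) -` X \<inter> space \<mu>)" if X: "X \<in> sets \<mu>" for X
  proof -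
    have eq: "\<mu> = distr \<mu> \<mu> (\<lambda>(a, b). (b, a))" unfolding \<mu>_def by (rule PP.distr_pair_swap)
    have "emeasure \<mu> X = emeasure (distr \<mu> \<mu> (\<lambda>(a, b). (b, a))) X"
      by (rule arg_cong[of _ _ "\<lambda>M. emeasure M X", OF eq])
    also have "\<dots> = emeasure \<mu> ((\<lambda>(a, b). (b, a)) -` X \<inter> space \<mu>)"
      using X by (intro emeasure_distr) (auto simp: \<mu>_def measurable_pair_swap')
    finally show ?thesis .
  qed
  have cp: "coupling P0 P1 \<pi>"
    unfolding coupling_def
  proof (intro conjI)
    show "prob_space \<pi>" unfolding \<pi>_def \<mu>_def by (rule PP.prob_space_distr[OF mm[OF \<Phi>m, unfolded \<mu>_def]])
    show "sets \<pi> = sets borel" by (simp add: \<pi>_def)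
    have "distr \<pi> borel fst = distr \<mu> borel (fst \<circ> \<Phi>)"
      unfolding \<pi>_def by (rule distr_distr[OF fstb mm[OF \<Phi>m]])
    also have "fst \<circ> \<Phi> = fst" by (rule ext) (simp add: \<Phi>_def)
    finally show "distr \<pi> borel fst = P0" using dfst' by simp
    have P1e: "P1 = distr P0 borel T" using ot unfolding ot_map_def by simp
    also have "\<dots> = distr (distr \<mu> P0 fst) borel T" by (simp only: dfst)
    also have "\<dots> = distr \<mu> borel (T \<circ> fst)"
    proof (rule distr_distr)
      show "T \<in> borel_measurable P0" by (rule mP[OF Tm])
      show "fst \<in> measurable \<mu> P0"
        using mm[OF fstb] measurable_cong_sets[OF refl P0s] by blast
    qed
    finally have P1e': "P1 = distr \<mu> borel (T \<circ> fst)" .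
    have "distr \<pi> borel snd = distr \<mu> borel (snd \<circ> \<Phi>)"
      unfolding \<pi>_def by (rule distr_distr[OF sndb mm[OF \<Phi>m]])
    also have "\<dots> = distr \<mu> borel (T \<circ> fst)"
    proof (rule measure_eqI)
      show "sets (distr \<mu> borel (snd \<circ> \<Phi>)) = sets (distr \<mu> borel (T \<circ> fst))" by simp
      fix E assume "E \<in> sets (distr \<mu> borel (snd \<circ> \<Phi>))"
      then have E: "E \<in> sets borel" by simp
      define X1 where "X1 = W \<inter> (\<lambda>p. T (snd p)) -` E"
      define X2 where "X2 = W \<inter> (\<lambda>p. T (fst p)) -` E"
      define Y where "Y = - W \<inter> (\<lambda>p. T (fst p)) -` E"
      have X1m: "X1 \<in> sets \<mu>" unfolding X1_def s\<mu> using measurable_sets[OF Tsnd E] Wb by simp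
      have X2m: "X2 \<in> sets \<mu>" unfolding X2_def s\<mu> using measurable_sets[OF Tfst E] Wb by simp
      have Ym: "Y \<in> sets \<mu>" unfolding Y_def s\<mu> using measurable_sets[OF Tfst E] Wb by (simp add: Diff_eq[symmetric] sets.Diff Compl_eq_Diff_UNIV)
      have e12: "emeasure \<mu> X1 = emeasure \<mu> X2"
      proof -
        have "(\<lambda>(a, b). (b, a)) -` X1 \<inter> space \<mu> = X2"
          unfolding X1_def X2_def sp\<mu> using Wsym by auto
        then show ?thesis using swap_meas[OF X1m] by simp
      qed
      have "emeasure (distr \<mu> borel (snd \<circ> \<Phi>)) E = emeasure \<mu> ((snd \<circ> \<Phi>) -` E \<inter> space \<mu>)"
        by (rule emeasure_distr[OF measurable_comp[OF mm[OF \<Phi>m] sndb] E])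
      also have "(snd \<circ> \<Phi>) -` E \<inter> space \<mu> = X1 \<union> Y"
        unfolding X1_def Y_def sp\<mu> \<Phi>_def by (auto split: if_splits)
      also have "emeasure \<mu> (X1 \<union> Y) = emeasure \<mu> X1 + emeasure \<mu> Y"
        by (rule plus_emeasure[OF X1m Ym, symmetric]) (auto simp: X1_def Y_def)
      also have "\<dots> = emeasure \<mu> X2 + emeasure \<mu> Y" by (simp add: e12)
      also have "\<dots> = emeasure \<mu> (X2 \<union> Y)"
        by (rule plus_emeasure[OF X2m Ym]) (auto simp: X2_def Y_def)
      also have "X2 \<union> Y = (T \<circ> fst) -` E \<inter> space \<mu>"
        unfolding X2_def Y_def sp\<mu> by auto
      also have "emeasure \<mu> ((T \<circ> fst) -` E \<inter> space \<mu>) = emeasure (distr \<mu> borel (T \<circ> fst)) E"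
        by (rule emeasure_distr[OF measurable_comp[OF mm[OF fstb] Tm] E, symmetric])
      finally show "emeasure (distr \<mu> borel (snd \<circ> \<Phi>)) E = emeasure (distr \<mu> borel (T \<circ> fst)) E" .
    qed
    finally show "distr \<pi> borel snd = P1" using P1e' by simp
  qed
  have ot_ineq: "(\<integral>\<^sup>+ x. ennreal ((norm (x - T x))\<^sup>2) \<partial>P0) \<le> (\<integral>\<^sup>+ p. ennreal ((norm (fst p - snd p))\<^sup>2) \<partial>\<pi>)"
    using ot cp unfolding ot_map_def by blast
  define c0 where "c0 p = (norm (fst p - T (fst p)))\<^sup>2" for p :: "(real^'n) \<times> (real^'n)"
  define \<phi> where "\<phi> p = (norm (fst p - T (snd p)))\<^sup>2 - c0 p" for p :: "(real^'n) \<times> (real^'n)"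
  define \<Delta> where "\<Delta> p = (fst p - snd p) \<bullet> (T (fst p) - T (snd p))" for p :: "(real^'n) \<times> (real^'n)"
  define g where "g p = (norm (fst p - snd (\<Phi> p)))\<^sup>2" for p
  have fstP: "fst \<in> measurable \<mu> P0"
    using mm[OF fstb] measurable_cong_sets[OF refl P0s] by blast
  have cont_m: "f \<in> borel_measurable borel" if "continuous_on UNIV f" for f :: "_ \<Rightarrow> real"
    using that by (rule borel_measurable_continuous_onI)
  have lift: "integrable \<mu> (\<lambda>p. f (fst p))" if "integrable P0 f" "continuous_on UNIV f" for f :: "_ \<Rightarrow> real"
  proof -
    have "integrable (distr \<mu> P0 fst) f" using that(1) dfst by simp
    then show ?thesis using integrable_distr_eq[OF fstP mP[OF cont_m[OF that(2)]]] by simp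
  qed
  have c0i: "integrable \<mu> c0" unfolding c0_def
    by (rule lift[OF fin]) (intro continuous_intros continuous_on_compose2[OF Tc]; simp)
  have n1: "integrable \<mu> (\<lambda>p. (norm (fst p))\<^sup>2)"
    by (rule lift[OF i1]) (intro continuous_intros)
  have nT1: "integrable \<mu> (\<lambda>p. (norm (T (fst p)))\<^sup>2)"
    by (rule lift[OF i2]) (intro continuous_intros continuous_on_compose2[OF Tc]; simp)
  have nT2: "integrable \<mu> (\<lambda>p. (norm (T (snd p)))\<^sup>2)"
  proof -
    have "integrable (P0 \<Otimes>\<^sub>M P0) (\<lambda>(a, b). (norm (T (fst (b, a))))\<^sup>2)"
      by (rule PP.integrable_product_swap) (use nT1 in \<open>simp add: \<mu>_def\<close>)
    then show ?thesis by (simp add: \<mu>_def case_prod_beta')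
  qed
  have a1: "integrable \<mu> (\<lambda>p. (norm (fst p - T (snd p)))\<^sup>2)"
  proof (rule Bochner_Integration.integrable_bound[OF _ _ AE_I2])
    show "integrable \<mu> (\<lambda>p. 2 * (norm (fst p))\<^sup>2 + 2 * (norm (T (snd p)))\<^sup>2)"
      using n1 nT2 by simp
    show "(\<lambda>p. (norm (fst p - T (snd p)))\<^sup>2) \<in> borel_measurable \<mu>"
      by (rule mm, rule cont_m) (intro continuous_intros continuous_on_compose2[OF Tc]; simp)
    fix p :: "(real^'n) \<times> (real^'n)"
    show "norm ((norm (fst p - T (snd p)))\<^sup>2) \<le> norm (2 * (norm (fst p))\<^sup>2 + 2 * (norm (T (snd p)))\<^sup>2)"
      using sq_le2[of "fst p" "T (snd p)"] by simp
  qed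
  have \<phi>i: "integrable \<mu> \<phi>" unfolding \<phi>_def using a1 c0i by simp
  have ABs: "A \<times> B \<in> sets \<mu>" "B \<times> A \<in> sets \<mu>" unfolding s\<mu> using Ab by (simp_all add: open_Times A_def B_def)
  have iAB: "integrable \<mu> (\<lambda>p. \<phi> p * indicator (A \<times> B) p)" by (rule integrable_real_mult_indicator[OF ABs(1) \<phi>i])
  have iBA: "integrable \<mu> (\<lambda>p. \<phi> p * indicator (B \<times> A) p)" by (rule integrable_real_mult_indicator[OF ABs(2) \<phi>i])
  have \<phi>m: "\<phi> \<in> borel_measurable \<mu>" using \<phi>i by auto
  have iBAm: "(\<lambda>p. \<phi> p * indicator (B \<times> A) p) \<in> borel_measurable (P0 \<Otimes>\<^sub>M P0)" using iBA unfolding \<mu>_def by auto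
  have swapBA: "(\<lambda>(a, b). \<phi> (b, a) * indicator (B \<times> A) (b, a)) = (\<lambda>p. \<phi> (snd p, fst p) * indicator (A \<times> B) p)"
    by (auto simp: indicator_def)
  have iABs: "integrable \<mu> (\<lambda>p. \<phi> (snd p, fst p) * indicator (A \<times> B) p)"
  proof -
    have "integrable (P0 \<Otimes>\<^sub>M P0) (\<lambda>(a, b). \<phi> (b, a) * indicator (B \<times> A) (b, a))"
      by (rule PP.integrable_product_swap[of "\<lambda>p. \<phi> p * indicator (B \<times> A) p"]) (use iBA in \<open>simp add: \<mu>_def\<close>)
    then show ?thesis unfolding swapBA \<mu>_def .
  qed
  have intBA: "(\<integral>p. \<phi> p * indicator (B \<times> A) p \<partial>\<mu>) = (\<integral>p. \<phi> (snd p, fst p) * indicator (A \<times> B) p \<partial>\<mu>)"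
    using PP.integral_product_swap[OF iBAm] unfolding swapBA \<mu>_def by simp
  define k where "k p = indicator (A \<times> B) p * (2 * \<Delta> p)" for p
  have kphi: "\<phi> p * indicator (A \<times> B) p + \<phi> (snd p, fst p) * indicator (A \<times> B) p = k p" for p
  proof -
    have e: "\<phi> p + \<phi> (snd p, fst p) = 2 * \<Delta> p"
      using swap_identity[of "fst p" T "snd p"] by (simp add: \<phi>_def c0_def \<Delta>_def)
    have "\<phi> p * indicator (A \<times> B) p + \<phi> (snd p, fst p) * indicator (A \<times> B) p
        = (\<phi> p + \<phi> (snd p, fst p)) * indicator (A \<times> B) p" by (simp add: distrib_right)
    then show ?thesis unfolding e k_def by simp
  qed
  have ki: "integrable \<mu> k" using Bochner_Integration.integrable_add[OF iAB iABs] unfolding kphi .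
  have gdec: "g p = c0 p + \<phi> p * indicator (A \<times> B) p + \<phi> p * indicator (B \<times> A) p" for p
  proof -
    obtain a b where p: "p = (a, b)" by fastforce
    show ?thesis
    proof (cases "p \<in> W")
      case True
      then have "p \<in> A \<times> B \<and> p \<notin> B \<times> A \<or> p \<in> B \<times> A \<and> p \<notin> A \<times> B" using AB unfolding W_def by auto
      then show ?thesis using True by (auto simp: g_def \<Phi>_def \<phi>_def c0_def indicator_def p)
    next
      case False
      then have "p \<notin> A \<times> B" "p \<notin> B \<times> A" unfolding W_def by auto
      then show ?thesis using False by (simp add: g_def \<Phi>_def c0_def p)
    qed
  qed
  have gi: "integrable \<mu> g" unfolding gdec[abs_def] using c0i iAB iBA by simp
  have intg: "(\<integral>p. g p \<partial>\<mu>) = (\<integral>p. c0 p \<partial>\<mu>) + (\<integral>p. k p \<partial>\<mu>)"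
  proof -
    have "(\<integral>p. g p \<partial>\<mu>) = (\<integral>p. c0 p \<partial>\<mu>) + (\<integral>p. \<phi> p * indicator (A \<times> B) p \<partial>\<mu>) + (\<integral>p. \<phi> p * indicator (B \<times> A) p \<partial>\<mu>)"
      unfolding gdec[abs_def]
      using Bochner_Integration.integral_add[OF Bochner_Integration.integrable_add[OF c0i iAB] iBA]
        Bochner_Integration.integral_add[OF c0i iAB] by simp
    also have "\<dots> = (\<integral>p. c0 p \<partial>\<mu>) + ((\<integral>p. \<phi> p * indicator (A \<times> B) p \<partial>\<mu>) + (\<integral>p. \<phi> (snd p, fst p) * indicator (A \<times> B) p \<partial>\<mu>))"
      unfolding intBA by simp
    also have "(\<integral>p. \<phi> p * indicator (A \<times> B) p \<partial>\<mu>) + (\<integral>p. \<phi> (snd p, fst p) * indicator (A \<times> B) p \<partial>\<mu>) = (\<integral>p. k p \<partial>\<mu>)"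
      using Bochner_Integration.integral_add[OF iAB iABs] unfolding kphi by simp
    finally show ?thesis .
  qed
  have kle: "k p \<le> 0" for p
  proof (cases "p \<in> A \<times> B")
    case True
    then have "\<Delta> p < 0" using \<delta>(3) unfolding \<Delta>_def A_def B_def by (auto simp: mem_Times_iff)
    then show ?thesis using True by (simp add: k_def)
  next
    case False then show ?thesis by (simp add: k_def)
  qed
  have kneg: "(\<integral>p. k p \<partial>\<mu>) < 0"
  proof (rule ccontr)
    assume "\<not> (\<integral>p. k p \<partial>\<mu>) < 0"
    moreover have "0 \<le> (\<integral>p. - k p \<partial>\<mu>)" by (rule Bochner_Integration.integral_nonneg) (simp add: kle)
    moreover have "(\<integral>p. - k p \<partial>\<mu>) = - (\<integral>p. k p \<partial>\<mu>)" by (rule Bochner_Integration.integral_minus)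
    ultimately have "(\<integral>p. - k p \<partial>\<mu>) = 0" by linarith
    then have "AE p in \<mu>. - k p = 0"
      using integral_nonneg_eq_0_iff_AE[of \<mu> "\<lambda>p. - k p"] ki kle by simp
    then have "AE p in \<mu>. p \<notin> A \<times> B"
    proof eventually_elim
      fix p assume "- k p = 0"
      show "p \<notin> A \<times> B"
      proof
        assume "p \<in> A \<times> B"
        then have "\<Delta> p < 0" using \<delta>(3) unfolding \<Delta>_def A_def B_def by (auto simp: mem_Times_iff)
        then show False using \<open>- k p = 0\<close> \<open>p \<in> A \<times> B\<close> by (simp add: k_def)
      qed
    qed
    then have "{p \<in> space \<mu>. \<not> p \<notin> A \<times> B} \<in> null_sets \<mu>"
      using AE_iff_null[of \<mu> "\<lambda>p. p \<notin> A \<times> B"] ABs(1) sp\<mu> by simp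
    then have "emeasure \<mu> (A \<times> B) = 0" using sp\<mu> by (simp add: null_sets_def)
    moreover have "emeasure \<mu> (A \<times> B) = emeasure P0 A * emeasure P0 B"
      unfolding \<mu>_def using Ab P0s by (intro P.emeasure_pair_measure_Times) simp_all
    ultimately show False using A0 by simp
  qed
  have c0P: "(\<integral>p. c0 p \<partial>\<mu>) = (\<integral>x. (norm (x - T x))\<^sup>2 \<partial>P0)"
  proof -
    have "(\<integral>x. (norm (x - T x))\<^sup>2 \<partial>P0) = (\<integral>x. (norm (x - T x))\<^sup>2 \<partial>distr \<mu> P0 fst)" using dfst by simp
    also have "\<dots> = (\<integral>p. c0 p \<partial>\<mu>)" unfolding c0_def
      by (rule integral_distr[OF fstP mP[OF cont_m]]) (intro continuous_intros continuous_on_compose2[OF Tc]; simp)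
    finally show ?thesis by simp
  qed
  have "(\<integral>\<^sup>+ p. ennreal ((norm (fst p - snd p))\<^sup>2) \<partial>\<pi>) = (\<integral>\<^sup>+ p. ennreal ((norm (fst (\<Phi> p) - snd (\<Phi> p)))\<^sup>2) \<partial>\<mu>)"
    unfolding \<pi>_def
  proof (rule nn_integral_distr[OF mm[OF \<Phi>m]])
    have mf: "(\<lambda>p::(real^'n) \<times> (real^'n). ennreal ((norm (fst p - snd p))\<^sup>2)) \<in> borel_measurable borel"
    proof -
      have r: "(\<lambda>p::(real^'n) \<times> (real^'n). (norm (fst p - snd p))\<^sup>2) \<in> borel_measurable borel"
        by (intro borel_measurable_continuous_onI continuous_intros)
      show ?thesis by (rule measurable_compose[OF r measurable_ennreal])
    qed
    then show "(\<lambda>p. ennreal ((norm (fst p - snd p))\<^sup>2)) \<in> borel_measurable (distr \<mu> borel \<Phi>)"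
      using measurable_cong_sets[of "distr \<mu> borel \<Phi>" borel "borel::ennreal measure" borel] by simp
  qed
  also have "\<dots> = (\<integral>\<^sup>+ p. ennreal (g p) \<partial>\<mu>)" by (simp add: g_def \<Phi>_def)
  also have "\<dots> = ennreal (\<integral>p. g p \<partial>\<mu>)" by (rule nn_integral_eq_integral[OF gi]) (simp add: g_def)
  finally have R: "(\<integral>\<^sup>+ p. ennreal ((norm (fst p - snd p))\<^sup>2) \<partial>\<pi>) = ennreal (\<integral>p. g p \<partial>\<mu>)" .
  have L: "(\<integral>\<^sup>+ x. ennreal ((norm (x - T x))\<^sup>2) \<partial>P0) = ennreal (\<integral>x. (norm (x - T x))\<^sup>2 \<partial>P0)"
    by (rule nn_integral_eq_integral[OF fin]) simp
  have g0: "0 \<le> (\<integral>p. g p \<partial>\<mu>)" by (rule Bochner_Integration.integral_nonneg) (simp add: g_def)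
  have "(\<integral>x. (norm (x - T x))\<^sup>2 \<partial>P0) \<le> (\<integral>p. g p \<partial>\<mu>)"
    using ot_ineq unfolding L R using g0 by simp
  then show False using intg kneg c0P by simp
qed

theorem theorem2p5:
  fixes P0 P1 :: "(real^'n) measure"
    and \<gamma> :: "((real^'n) \<times> (real^'n)) measure"
    and \<rho> :: "real \<Rightarrow> real^'n \<Rightarrow> real"
    and v :: "real \<Rightarrow> real^'n \<Rightarrow> real^'n"
    and C :: "real \<Rightarrow> real^'n \<Rightarrow> real^'n^'n"
  assumes P0: "prob_space P0" "sets P0 = sets borel"
    and P1: "prob_space P1" "sets P1 = sets borel"
    and \<gamma>: "coupling P0 P1 \<gamma>"
    and dens: "\<forall>t\<in>{0..1}. \<rho> t \<in> borel_measurable borel \<and> (\<forall>x. 0 \<le> \<rho> t x) \<and>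
                 distr \<gamma> lborel (interp t) = density lborel (\<lambda>x. ennreal (\<rho> t x))"
    and vel_cond: "\<forall>t\<in>{0..1}. cond_exp_given \<gamma> (interp t) vel (v t)"
    and C_cond: "\<forall>t\<in>{0..1}. cond_exp_given \<gamma> (interp t) (\<lambda>p. outer (vel p) (vel p)) (C t)"
    and flow: "\<exists>\<phi> :: real \<Rightarrow> real^'n \<Rightarrow> real^'n.
                 (\<forall>x. \<phi> 0 x = x \<and> C2_path_on {0..1} (\<lambda>t. \<phi> t x) \<and>
                      (\<forall>t\<in>{0..1}. ((\<lambda>s. \<phi> s x) has_vector_derivative v t (\<phi> t x)) (at t within {0..1}))) \<and>
                 (\<forall>t\<in>{0..1}. \<exists>g. homeomorphism UNIV UNIV (\<phi> t) g)"
    and v_C1: "C1_on ({0..1} \<times> UNIV) (\<lambda>p. v (fst p) (snd p))"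
    and mom_X: "\<forall>t\<in>{0..1}. integrable \<gamma> (\<lambda>p. (norm (interp t p))\<^sup>2)"
    and mom_Pi: "\<forall>t\<in>{0..1}. integrable \<gamma> (\<lambda>p. (norm (reynolds C v t (interp t p)))\<^sup>2)"
    and Pi_cont: "\<forall>x. continuous (at 1 within {0..1}) (\<lambda>t. reynolds C v t x)"
  shows
    "((\<forall>t\<in>{0..1}. weak_div_zero (\<lambda>x. \<rho> t x *\<^sub>R reynolds C v t x)) \<longrightarrow>
        (\<exists>T. T \<in> borel_measurable borel \<and> distr P0 borel T = P1 \<and>
             distr P0 borel (\<lambda>x. (x, T x)) = \<gamma>))
     \<and> (\<forall>T. T \<in> borel_measurable borel \<and> distr P0 borel T = P1 \<and>
             distr P0 borel (\<lambda>x. (x, T x)) = \<gamma> \<and>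
             (\<forall>x. T differentiable (at x) \<and> (\<forall>h. 0 \<le> h \<bullet> (jacobian T (at x) *v h))) \<longrightarrow>
          (\<forall>t\<in>{0..<1}. weak_div_zero (\<lambda>x. \<rho> t x *\<^sub>R reynolds C v t x)))
     \<and> (\<forall>T. ot_map P0 P1 T \<and> (\<forall>x. T differentiable (at x)) \<and>
             continuous_on UNIV (\<lambda>x. jacobian T (at x)) \<and>
             distr P0 borel (\<lambda>x. (x, T x)) = \<gamma> \<longrightarrow>
          (\<forall>t\<in>{0..<1}. weak_div_zero (\<lambda>x. \<rho> t x *\<^sub>R reynolds C v t x)))"
proof -
  have i0: "interp 0 = fst" by (rule ext) (simp add: interp_def)
  have i1: "interp 1 = snd" by (rule ext) (simp add: interp_def)
  have ps: "prob_space \<gamma>" and sg: "sets \<gamma> = sets borel"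
    and g0: "distr \<gamma> borel fst = P0" and g1: "distr \<gamma> borel snd = P1"
    using \<gamma> unfolding coupling_def by auto
  have reyn: "(\<lambda>x. \<rho> t x *\<^sub>R reynolds C v t x) = (\<lambda>x. \<rho> t x *\<^sub>R (C t x - outer (v t x) (v t x)))" for t
    by (simp add: reynolds_def)
  have part1_res: "(\<forall>t\<in>{0..1}. weak_div_zero (\<lambda>x. \<rho> t x *\<^sub>R reynolds C v t x)) \<longrightarrow>
        (\<exists>T. T \<in> borel_measurable borel \<and> distr P0 borel T = P1 \<and>
             distr P0 borel (\<lambda>x. (x, T x)) = \<gamma>)"
  proof
    assume H: "\<forall>t\<in>{0..1}. weak_div_zero (\<lambda>x. \<rho> t x *\<^sub>R reynolds C v t x)"
    show "\<exists>T. T \<in> borel_measurable borel \<and> distr P0 borel T = P1 \<and> distr P0 borel (\<lambda>x. (x, T x)) = \<gamma>"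
    proof (rule part1[OF ps sg g0 g1])
      show "\<rho> 0 \<in> borel_measurable borel" "\<forall>x. 0 \<le> \<rho> 0 x"
        "distr \<gamma> lborel fst = density lborel (\<lambda>x. ennreal (\<rho> 0 x))"
      proof -
        have d0: "\<rho> 0 \<in> borel_measurable borel \<and> (\<forall>x. 0 \<le> \<rho> 0 x) \<and>
                 distr \<gamma> lborel (interp 0) = density lborel (\<lambda>x. ennreal (\<rho> 0 x))"
          using dens by simp
        then show "\<rho> 0 \<in> borel_measurable borel" "\<forall>x. 0 \<le> \<rho> 0 x"
          "distr \<gamma> lborel fst = density lborel (\<lambda>x. ennreal (\<rho> 0 x))" unfolding i0 by auto
      qed
      show "cond_exp_given \<gamma> fst vel (v 0)" using vel_cond[rule_format, of 0] unfolding i0 by simp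
      show "cond_exp_given \<gamma> fst (\<lambda>p. outer (vel p) (vel p)) (C 0)" using C_cond[rule_format, of 0] unfolding i0 by simp
      show "integrable \<gamma> (\<lambda>p. (norm (C 0 (fst p) - outer (v 0 (fst p)) (v 0 (fst p))))\<^sup>2)"
        using mom_Pi[rule_format, of 0] unfolding i0 by (simp add: reynolds_def)
      show "weak_div_zero (\<lambda>x. \<rho> 0 x *\<^sub>R (C 0 x - outer (v 0 x) (v 0 x)))"
        using H[rule_format, of 0] unfolding reyn by simp
    qed
  qed
  have core: "weak_div_zero (\<lambda>x. \<rho> t x *\<^sub>R reynolds C v t x)"
    if gT: "distr P0 borel (\<lambda>x. (x, T x)) = \<gamma>" and Tc: "continuous_on UNIV T"
      and S: "closed S" "AE x in P0. x \<in> S" and mono: "\<forall>x\<in>S. \<forall>y\<in>S. 0 \<le> (T x - T y) \<bullet> (x - y)"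
      and t: "t \<in> {0..<1}" for T S t
  proof -
    have t01: "t \<in> {0..1}" using t by auto
    have "weak_div_zero (\<lambda>x. \<rho> t x *\<^sub>R (C t x - outer (v t x) (v t x)))"
    proof (rule det_core[OF sg P0(2) gT Tc S mono])
      show "0 \<le> t" "t < 1" using t by auto
      show "\<rho> t \<in> borel_measurable borel" "\<forall>x. 0 \<le> \<rho> t x"
        "distr \<gamma> lborel (interp t) = density lborel (\<lambda>x. ennreal (\<rho> t x))"
        using dens[rule_format, OF t01] by auto
      show "cond_exp_given \<gamma> (interp t) vel (v t)" using vel_cond[rule_format, OF t01] .
      show "cond_exp_given \<gamma> (interp t) (\<lambda>p. outer (vel p) (vel p)) (C t)" using C_cond[rule_format, OF t01] .
    qed
    then show ?thesis unfolding reyn .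
  qed
  have diffc: "continuous_on UNIV T" if "\<forall>x. T differentiable (at x)" for T :: "real^'n \<Rightarrow> real^'n"
    using that by (meson continuous_at_imp_continuous_on differentiable_imp_continuous_within)
  have part2_res: "\<forall>T. T \<in> borel_measurable borel \<and> distr P0 borel T = P1 \<and>
             distr P0 borel (\<lambda>x. (x, T x)) = \<gamma> \<and>
             (\<forall>x. T differentiable (at x) \<and> (\<forall>h. 0 \<le> h \<bullet> (jacobian T (at x) *v h))) \<longrightarrow>
          (\<forall>t\<in>{0..<1}. weak_div_zero (\<lambda>x. \<rho> t x *\<^sub>R reynolds C v t x))"
  proof (intro allI impI ballI)
    fix T :: "real^'n \<Rightarrow> real^'n" and t :: real
    assume A: "T \<in> borel_measurable borel \<and> distr P0 borel T = P1 \<and> distr P0 borel (\<lambda>x. (x, T x)) = \<gamma> \<and>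
             (\<forall>x. T differentiable (at x) \<and> (\<forall>h. 0 \<le> h \<bullet> (jacobian T (at x) *v h)))"
      and t: "t \<in> {0..<1}"
    have psd: "\<forall>x. T differentiable (at x) \<and> (\<forall>h. 0 \<le> h \<bullet> (jacobian T (at x) *v h))" using A by blast
    show "weak_div_zero (\<lambda>x. \<rho> t x *\<^sub>R reynolds C v t x)"
    proof (rule core[of T UNIV])
      show "distr P0 borel (\<lambda>x. (x, T x)) = \<gamma>" using A by blast
      show "continuous_on UNIV T" using diffc psd by blast
      show "\<forall>x\<in>UNIV. \<forall>y\<in>UNIV. 0 \<le> (T x - T y) \<bullet> (x - y)" using psd_mono[OF psd] by blast
    qed (use t in auto)
  qed
  have part3_res: "\<forall>T. ot_map P0 P1 T \<and> (\<forall>x. T differentiable (at x)) \<and>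
             continuous_on UNIV (\<lambda>x. jacobian T (at x)) \<and>
             distr P0 borel (\<lambda>x. (x, T x)) = \<gamma> \<longrightarrow>
          (\<forall>t\<in>{0..<1}. weak_div_zero (\<lambda>x. \<rho> t x *\<^sub>R reynolds C v t x))"
  proof (intro allI impI ballI)
    fix T :: "real^'n \<Rightarrow> real^'n" and t :: real
    assume A: "ot_map P0 P1 T \<and> (\<forall>x. T differentiable (at x)) \<and>
             continuous_on UNIV (\<lambda>x. jacobian T (at x)) \<and> distr P0 borel (\<lambda>x. (x, T x)) = \<gamma>"
      and t: "t \<in> {0..<1}"
    have ot: "ot_map P0 P1 T" and gT: "distr P0 borel (\<lambda>x. (x, T x)) = \<gamma>" using A by auto
    have Tc: "continuous_on UNIV T" using diffc A by blast
    have mapm: "(\<lambda>x. (x, T x)) \<in> measurable P0 borel"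
      by (subst measurable_cong_sets[OF P0(2) refl]) (intro borel_measurable_continuous_onI continuous_on_Pair continuous_on_id Tc)
    have down: "integrable P0 (\<lambda>x. f (x, T x))" if "integrable \<gamma> f" "continuous_on UNIV f" for f :: "_ \<Rightarrow> real"
    proof -
      have "integrable (distr P0 borel (\<lambda>x. (x, T x))) f" using that(1) gT by simp
      then show ?thesis
        using integrable_distr_eq[OF mapm borel_measurable_continuous_onI[OF that(2)]] by simp
    qed
    have m0: "integrable \<gamma> (\<lambda>p. (norm (fst p))\<^sup>2)" using mom_X[rule_format, of 0] unfolding i0 by simp
    have m1: "integrable \<gamma> (\<lambda>p. (norm (snd p))\<^sup>2)" using mom_X[rule_format, of 1] unfolding i1 by simp
    have in1: "integrable P0 (\<lambda>x. (norm x)\<^sup>2)" using down[OF m0] by (simp add: continuous_intros)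
    have in2: "integrable P0 (\<lambda>x. (norm (T x))\<^sup>2)" using down[OF m1] by (simp add: continuous_intros)
    have fin: "integrable P0 (\<lambda>x. (norm (x - T x))\<^sup>2)"
    proof (rule Bochner_Integration.integrable_bound[OF _ _ AE_I2])
      show "integrable P0 (\<lambda>x. 2 * (norm x)\<^sup>2 + 2 * (norm (T x))\<^sup>2)" using in1 in2 by simp
      show "(\<lambda>x. (norm (x - T x))\<^sup>2) \<in> borel_measurable P0"
        by (subst measurable_cong_sets[OF P0(2) refl]) (intro borel_measurable_continuous_onI continuous_intros Tc)
      fix x :: "real^'n"
      show "norm ((norm (x - T x))\<^sup>2) \<le> norm (2 * (norm x)\<^sup>2 + 2 * (norm (T x))\<^sup>2)"
        using sq_le2[of x "T x"] by simp
    qed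
    obtain S where S: "closed S" "AE x in P0. x \<in> S" "\<forall>x\<in>S. \<forall>e>0. emeasure P0 (ball x e) \<noteq> 0"
      using support_exists[OF P0(2)] by blast
    have mono: "\<forall>x\<in>S. \<forall>y\<in>S. 0 \<le> (T x - T y) \<bullet> (x - y)"
      using ot_mono[OF P0(1) P0(2) ot Tc fin in1 in2] S(3) by blast
    show "weak_div_zero (\<lambda>x. \<rho> t x *\<^sub>R reynolds C v t x)"
      by (rule core[OF gT Tc S(1,2) mono t])
  qed
  show ?thesis using part1_res part2_res part3_res by blast
qed

end
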